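(* Let $G$ be a connected, closed Lie subgroup of $SO_o(1,2)\ltimes\mathbb{R}^3\subset Iso(\mathbb{R}^3_1)$ which acts isometrically and with cohomogeneity one on $\mathbb{R}^3_1$, with Lie algebra $\mathfrak g\subset\mathfrak{so}(1,2)\oplus_\pi\mathbb{R}^3$. If $L(G)$ is conjugate to $A$, then $\mathfrak g$ is conjugate within $\mathfrak{so}(1,2)\oplus_\pi\mathbb{R}^3$ to one of the following Lie algebras: (i) $\mathfrak a\oplus\mathbb{R}=\{(tB_1,se_3):t,s\in\mathbb{R}\}$; (ii) $\{(tB_1,ue_1+ve_2):t,u,v\in\mathbb{R}\}$; (iii) $\{(tB_1,u(e_1+e_2)+ve_3):t,u,v\in\mathbb{R}\}$; (iv) $\{(tB_1,u(e_1-e_2)+ve_3):t,u,v\in\mathbb{R}\}$; (v) $\{(tB_1,s(e_1\pm e_2)+t\beta e_3):t,s\in\mathbb{R}\}$, where $\beta$ is a fixed real number.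
   Context: $\mathbb{R}^3_1$ is $\mathbb{R}^3$ with the scalar product $\langle x,y\rangle=-x_1y_1+x_2y_2+x_3y_3$; $Iso(\mathbb{R}^3_1)=O(1,2)\ltimes\mathbb{R}^3$ with $(A,a)$ acting by $x\mapsto Ax+a$; $SO_o(1,2)$ is the identity component of $O(1,2)$. The Lie algebra of $SO_o(1,2)\ltimes\mathbb{R}^3$ is $\mathfrak{so}(1,2)\oplus_\pi\mathbb{R}^3$, pairs $(X,v)$, where $\pi$ is the natural representation of $\mathfrak{so}(1,2)$ on $\mathbb{R}^3$ (bracket $[(X,v),(Y,w)]=([X,Y],Xw-Yv)$). $L:G\to SO_o(1,2)$, $(A,a)\mapsto A$. $E_{ij}$ are the $3\times 3$ matrix units, $e_i$ the standard basis, $B_1=E_{12}+E_{21}$, $\mathfrak a=\mathbb{R}B_1$ and $A=\{\exp(tB_1):t\in\mathbb{R}\}$ (the standard $SO_o(1,1)$). Cohomogeneity one means some orbit has codimension one. *)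

theory Defs
  imports "HOL-Analysis.Analysis"
begin

text \<open>Vectors of R^3_1 and 3x3 real matrices; coordinates indexed by 1,2,3.
  An element (A,a) of SO_o(1,2) semidirect R^3 acts by x |-> A x + a.\<close>

type_synonym vec3 = "real^3"
type_synonym mat3 = "real^3^3"
type_synonym aff = "mat3 \<times> vec3"

definition Jmat :: mat3 where
  "Jmat = (\<chi> i j. if i = j then (if i = 1 then -1 else 1) else 0)"

definition SOo12 :: "mat3 set" where
  "SOo12 = {A. transpose A ** Jmat ** A = Jmat \<and> det A = 1 \<and> A $ 1 $ 1 > 0}"

definition aff_mult :: "aff \<Rightarrow> aff \<Rightarrow> aff" where
  "aff_mult g h = (fst g ** fst h, fst g *v snd h + snd g)"

definition aff_one :: aff where
  "aff_one = (mat 1, 0)"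

definition aff_inv :: "aff \<Rightarrow> aff" where
  "aff_inv g = (matrix_inv (fst g), - (matrix_inv (fst g) *v snd g))"

definition aff_act :: "aff \<Rightarrow> vec3 \<Rightarrow> vec3" where
  "aff_act g x = fst g *v x + snd g"

definition SOo12R3 :: "aff set" where
  "SOo12R3 = SOo12 \<times> UNIV"

definition is_subgroup :: "aff set \<Rightarrow> bool" where
  "is_subgroup G \<longleftrightarrow> G \<subseteq> SOo12R3 \<and> aff_one \<in> G \<and>
     (\<forall>g\<in>G. \<forall>h\<in>G. aff_mult g h \<in> G) \<and> (\<forall>g\<in>G. aff_inv g \<in> G)"

text \<open>Lie algebra of a closed subgroup G: the tangent space at the identity,
  i.e. velocities at 0 of curves in G through the identity.  Elements are pairs (X,v)
  in so(1,2) (+)_pi R^3.\<close>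
definition lie_alg :: "aff set \<Rightarrow> aff set" where
  "lie_alg G = {\<xi>. \<exists>\<gamma>::real \<Rightarrow> aff. (\<forall>t. \<gamma> t \<in> G) \<and> \<gamma> 0 = aff_one \<and>
                       (\<gamma> has_vector_derivative \<xi>) (at 0)}"

text \<open>Tangent space at x of the orbit G.x: the image of the Lie algebra under the
  differential of the orbit map g |-> g.x, i.e. {X x + v | (X,v) in g}.\<close>
definition orbit_tangent :: "aff set \<Rightarrow> vec3 \<Rightarrow> vec3 set" where
  "orbit_tangent G x = {fst \<xi> *v x + snd \<xi> | \<xi>. \<xi> \<in> lie_alg G}"

definition cohomogeneity_one :: "aff set \<Rightarrow> bool" where
  "cohomogeneity_one G \<longleftrightarrow> (\<exists>x. dim (orbit_tangent G x) = 2)"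

definition Lpart :: "aff set \<Rightarrow> mat3 set" where
  "Lpart G = fst ` G"

fun mpow :: "mat3 \<Rightarrow> nat \<Rightarrow> mat3" where
  "mpow M 0 = mat 1"
| "mpow M (Suc n) = M ** mpow M n"

definition mexp :: "mat3 \<Rightarrow> mat3" where
  "mexp M = (\<Sum>n. (1 / fact n) *\<^sub>R mpow M n)"

definition Emat :: "3 \<Rightarrow> 3 \<Rightarrow> mat3" where
  "Emat i j = (\<chi> k l. if k = i \<and> l = j then 1 else 0)"

definition e :: "3 \<Rightarrow> vec3" where
  "e i = axis i 1"

definition B1 :: mat3 where
  "B1 = Emat 1 2 + Emat 2 1"

definition Agrp :: "mat3 set" where
  "Agrp = {mexp (t *\<^sub>R B1) | t. True}"

text \<open>Adjoint action of h = (P,p) on so(1,2) (+)_pi R^3 (derivative of conjugation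
  g |-> h g h^-1): (X,v) |-> (P X P^-1, P v - P X P^-1 p).\<close>
definition Ad :: "aff \<Rightarrow> aff \<Rightarrow> aff" where
  "Ad h \<xi> = (let Y = fst h ** fst \<xi> ** matrix_inv (fst h)
            in (Y, fst h *v snd \<xi> - Y *v snd h))"

definition conj_alg :: "aff set \<Rightarrow> aff set \<Rightarrow> bool" where
  "conj_alg g k \<longleftrightarrow> (\<exists>h\<in>SOo12R3. g = Ad h ` k)"

definition alg_i :: "aff set" where
  "alg_i = {(t *\<^sub>R B1, s *\<^sub>R e 3) | t s. True}"
definition alg_ii :: "aff set" where
  "alg_ii = {(t *\<^sub>R B1, u *\<^sub>R e 1 + v *\<^sub>R e 2) | t u v. True}"
definition alg_iii :: "aff set" where
  "alg_iii = {(t *\<^sub>R B1, u *\<^sub>R (e 1 + e 2) + v *\<^sub>R e 3) | t u v. True}"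
definition alg_iv :: "aff set" where
  "alg_iv = {(t *\<^sub>R B1, u *\<^sub>R (e 1 - e 2) + v *\<^sub>R e 3) | t u v. True}"
definition alg_v_plus :: "real \<Rightarrow> aff set" where
  "alg_v_plus \<beta> = {(t *\<^sub>R B1, s *\<^sub>R (e 1 + e 2) + (t * \<beta>) *\<^sub>R e 3) | t s. True}"
definition alg_v_minus :: "real \<Rightarrow> aff set" where
  "alg_v_minus \<beta> = {(t *\<^sub>R B1, s *\<^sub>R (e 1 - e 2) + (t * \<beta>) *\<^sub>R e 3) | t s. True}"

end

theory Submission
  imports Defs
begin

definition Mt :: "real \<Rightarrow> mat3" where
  "Mt t = (\<chi> i j. if i = 3 \<or> j = 3 then (if i = j then 1 else 0) else if i = j then cosh t else sinh t)"

lemma three_neq[simp]: "(1::3) \<noteq> 2" "(1::3) \<noteq> 3" "(2::3) \<noteq> 3" "(2::3) \<noteq> 1" "(3::3) \<noteq> 1" "(3::3) \<noteq> 2"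
  by auto

lemma three_cases[case_names 1 2 3]: "(i = 1 \<Longrightarrow> P) \<Longrightarrow> (i = 2 \<Longrightarrow> P) \<Longrightarrow> (i = 3 \<Longrightarrow> P) \<Longrightarrow> P" for i :: 3
  using exhaust_3[of i] by blast

lemma Mt_add: "Mt (s + t) = Mt s ** Mt t"
  by (simp add: Mt_def vec_eq_iff forall_3 matrix_matrix_mult_def sum_3 cosh_add sinh_add algebra_simps)

lemma Mt_0[simp]: "Mt 0 = mat 1"
  by (simp add: Mt_def vec_eq_iff forall_3 mat_def)

lemma B1_entries: "B1 = (\<chi> i j. if i = 3 \<or> j = 3 then 0 else if i = j then 0 else 1)"
  by (simp add: B1_def Emat_def vec_eq_iff forall_3)

lemma sums_vec2:
  fixes f :: "nat \<Rightarrow> real^'n^'m"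
  assumes "\<And>i j. (\<lambda>n. f n $ i $ j) sums (L $ i $ j)"
  shows "f sums L"
proof -
  have "(\<lambda>n. \<Sum>k<n. f k) \<longlonglongrightarrow> L"
  proof (rule vec_tendstoI, rule vec_tendstoI)
    fix i j
    show "(\<lambda>n. (\<Sum>k<n. f k) $ i $ j) \<longlonglongrightarrow> L $ i $ j"
      using assms[of i j] by (simp add: sums_def)
  qed
  then show ?thesis by (simp add: sums_def)
qed

lemma B1_nth[simp]: "B1 $ 1 $ 1 = 0" "B1 $ 1 $ 2 = 1" "B1 $ 1 $ 3 = 0"
  "B1 $ 2 $ 1 = 1" "B1 $ 2 $ 2 = 0" "B1 $ 2 $ 3 = 0"
  "B1 $ 3 $ 1 = 0" "B1 $ 3 $ 2 = 0" "B1 $ 3 $ 3 = 0"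
  by (simp_all add: B1_entries)

lemma mmult_nth: "(A ** B) $ i $ j = A $ i $ 1 * B $ 1 $ j + A $ i $ 2 * B $ 2 $ j + A $ i $ 3 * B $ 3 $ j"
  for A B :: mat3
  by (simp add: matrix_matrix_mult_def sum_3)

definition mpF :: "real \<Rightarrow> nat \<Rightarrow> 3 \<Rightarrow> 3 \<Rightarrow> real" where
  "mpF t n i j = (if i = 3 \<or> j = 3 then (if i = j \<and> n = 0 then 1 else 0)
    else if i = j then (if even n then t ^ n else 0) else (if even n then 0 else t ^ n))"

lemma mpow_B1_nth: "mpow (t *\<^sub>R B1) n $ i $ j = mpF t n i j"
proof (induction n arbitrary: i j)
  case 0
  then show ?case by (cases i rule: three_cases; cases j rule: three_cases) (simp_all add: mat_def mpF_def)
next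
  case (Suc n)
  have e: "mpow (t *\<^sub>R B1) (Suc n) $ i $ j = t * B1 $ i $ 1 * mpF t n 1 j + t * B1 $ i $ 2 * mpF t n 2 j + t * B1 $ i $ 3 * mpF t n 3 j"
    by (simp add: mmult_nth Suc.IH)
  show ?case unfolding e
    by (cases i rule: three_cases; cases j rule: three_cases) (simp_all add: mpF_def)
qed

lemma Mt_nth[simp]: "Mt t $ 1 $ 1 = cosh t" "Mt t $ 1 $ 2 = sinh t" "Mt t $ 1 $ 3 = 0"
  "Mt t $ 2 $ 1 = sinh t" "Mt t $ 2 $ 2 = cosh t" "Mt t $ 2 $ 3 = 0"
  "Mt t $ 3 $ 1 = 0" "Mt t $ 3 $ 2 = 0" "Mt t $ 3 $ 3 = 1"
  by (simp_all add: Mt_def)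

lemma mexp_B1: "mexp (t *\<^sub>R B1) = Mt t"
proof -
  have "(\<lambda>n. (1 / fact n) *\<^sub>R mpow (t *\<^sub>R B1) n) sums Mt t"
  proof (rule sums_vec2)
    fix i j :: 3
    have s1: "(\<lambda>n. if n = 0 then 1 else 0) sums (1::real)"
      using sums_single[of 0 "\<lambda>_. 1::real"] by simp
    have s0: "(\<lambda>n. 0) sums (0::real)" by simp
    have m11: "\<And>n. (1 / fact n) * mpF t n 1 1 = (if even n then t ^ n /\<^sub>R fact n else 0)"
      and m12: "\<And>n. (1 / fact n) * mpF t n 1 2 = (if even n then 0 else t ^ n /\<^sub>R fact n)"
      and m22: "\<And>n. (1 / fact n) * mpF t n 2 2 = (if even n then t ^ n /\<^sub>R fact n else 0)"
      and m21: "\<And>n. (1 / fact n) * mpF t n 2 1 = (if even n then 0 else t ^ n /\<^sub>R fact n)"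
      and m33: "\<And>n. (1 / fact n) * mpF t n 3 3 = (if n = 0 then 1 else 0)"
      and m0: "\<And>n a b. a = 3 \<or> b = 3 \<Longrightarrow> a \<noteq> b \<Longrightarrow> (1 / fact n) * mpF t n a b = 0"
      by (auto simp: mpF_def divide_inverse mult.commute)
    have c: "(\<lambda>n. (1 / fact n) * mpF t n 1 1) sums cosh t"
      unfolding m11 by (rule cosh_converges)
    have s: "(\<lambda>n. (1 / fact n) * mpF t n 1 2) sums sinh t"
      unfolding m12 by (rule sinh_converges)
    have c2: "(\<lambda>n. (1 / fact n) * mpF t n 2 2) sums cosh t"
      unfolding m22 by (rule cosh_converges)
    have s2: "(\<lambda>n. (1 / fact n) * mpF t n 2 1) sums sinh t"
      unfolding m21 by (rule sinh_converges)
    have o: "(\<lambda>n. (1 / fact n) * mpF t n 3 3) sums 1"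
      unfolding m33 by (rule s1)
    have z: "\<And>a b. a = 3 \<or> b = 3 \<Longrightarrow> a \<noteq> b \<Longrightarrow> (\<lambda>n. (1 / fact n) * mpF t n a b) sums 0"
      using m0 by simp
    show "(\<lambda>n. ((1 / fact n) *\<^sub>R mpow (t *\<^sub>R B1) n) $ i $ j) sums (Mt t $ i $ j)"
      unfolding vector_scaleR_component mpow_B1_nth real_scaleR_def
      by (cases i rule: three_cases; cases j rule: three_cases)
        (simp_all only: Mt_nth c s c2 s2 o, (rule z; simp)+)
  qed
  then show ?thesis unfolding mexp_def by (simp add: sums_iff)
qed

definition Dm :: mat3 where "Dm = B1 ** B1"

lemma Dm_nth[simp]: "Dm $ 1 $ 1 = 1" "Dm $ 1 $ 2 = 0" "Dm $ 1 $ 3 = 0"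
  "Dm $ 2 $ 1 = 0" "Dm $ 2 $ 2 = 1" "Dm $ 2 $ 3 = 0"
  "Dm $ 3 $ 1 = 0" "Dm $ 3 $ 2 = 0" "Dm $ 3 $ 3 = 0"
  by (simp_all add: Dm_def mmult_nth)

lemma mat3_eqI: "(\<And>i j. A $ i $ j = B $ i $ j) \<Longrightarrow> A = B" for A B :: mat3
  by (simp add: vec_eq_iff)

lemma mat3_eq_iff: "A = B \<longleftrightarrow> (A $ 1 $ 1 = B $ 1 $ 1 \<and> A $ 1 $ 2 = B $ 1 $ 2 \<and> A $ 1 $ 3 = B $ 1 $ 3 \<and>
  A $ 2 $ 1 = B $ 2 $ 1 \<and> A $ 2 $ 2 = B $ 2 $ 2 \<and> A $ 2 $ 3 = B $ 2 $ 3 \<and>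
  A $ 3 $ 1 = B $ 3 $ 1 \<and> A $ 3 $ 2 = B $ 3 $ 2 \<and> A $ 3 $ 3 = B $ 3 $ 3)" for A B :: mat3
  by (auto simp: vec_eq_iff forall_3)

lemma vec3_eq_iff: "x = y \<longleftrightarrow> (x $ 1 = y $ 1 \<and> x $ 2 = y $ 2 \<and> x $ 3 = y $ 3)" for x y :: vec3
  by (auto simp: vec_eq_iff forall_3)

lemma mat1_nth[simp]: "(mat 1 :: mat3) $ 1 $ 1 = 1" "(mat 1 :: mat3) $ 1 $ 2 = 0" "(mat 1 :: mat3) $ 1 $ 3 = 0"
  "(mat 1 :: mat3) $ 2 $ 1 = 0" "(mat 1 :: mat3) $ 2 $ 2 = 1" "(mat 1 :: mat3) $ 2 $ 3 = 0"
  "(mat 1 :: mat3) $ 3 $ 1 = 0" "(mat 1 :: mat3) $ 3 $ 2 = 0" "(mat 1 :: mat3) $ 3 $ 3 = 1"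
  by (simp_all add: mat_def)

lemma mvec_nth: "(A *v x) $ i = A $ i $ 1 * x $ 1 + A $ i $ 2 * x $ 2 + A $ i $ 3 * x $ 3"
  for A :: mat3 and x :: vec3
  by (simp add: matrix_vector_mult_def sum_3)

lemma Mt_decomp: "Mt s = mat 1 + (cosh s - 1) *\<^sub>R Dm + sinh s *\<^sub>R B1"
  by (simp add: mat3_eq_iff)

lemma Mt_neg: "Mt s ** Mt (- s) = mat 1" "Mt (- s) ** Mt s = mat 1"
  using Mt_add[of s "-s"] Mt_add[of "-s" s] by simp_all

lemma Mt_eq_1_iff: "Mt s = mat 1 \<longleftrightarrow> s = 0"
  by (auto simp: mat3_eq_iff)

lemma nth_le_norm_mat: "\<bar>A $ i $ j\<bar> \<le> norm A" for A :: mat3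
proof -
  have "norm (A $ i $ j) \<le> norm (A $ i)" by (rule Finite_Cartesian_Product.norm_nth_le)
  also have "\<dots> \<le> norm A" by (rule Finite_Cartesian_Product.norm_nth_le)
  finally show ?thesis by simp
qed

lemma abs_le_norm_Mt: "\<bar>s\<bar> \<le> norm (Mt s - mat 1)"
proof -
  have "\<bar>s\<bar> \<le> \<bar>sinh s\<bar>"
    using real_le_abs_sinh[of s] by (simp add: sinh_field_def exp_minus)
  also have "\<dots> = \<bar>(Mt s - mat 1) $ 1 $ 2\<bar>" by simp
  also have "\<dots> \<le> norm (Mt s - mat 1)" by (rule nth_le_norm_mat)
  finally show ?thesis .
qed

lemma hyp_bound_pos: "0 \<le> (s::real) \<Longrightarrow> s \<le> 1/2 \<Longrightarrow> \<bar>cosh s - 1\<bar> + \<bar>sinh s\<bar> \<le> 3 * s"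
proof -
  assume s: "0 \<le> s" "s \<le> 1/2"
  have e1: "exp s \<le> 1 + 2 * s" using real_exp_bound_lemma s by simp
  have e2: "1 - s \<le> exp (-s)" using exp_ge_add_one_self[of "-s"] by simp
  have e3: "exp (-s) \<le> 1" using s by simp
  have e4: "1 \<le> exp s" using s by simp
  have c: "cosh s = (exp s + exp (-s)) / 2" by (simp add: cosh_field_def)
  have sh: "sinh s = (exp s - exp (-s)) / 2" by (simp add: sinh_field_def)
  have a1: "\<bar>cosh s - 1\<bar> = cosh s - 1" using cosh_real_ge_1[of s] by simp
  have a2: "\<bar>sinh s\<bar> = sinh s" using s by simp
  show ?thesis unfolding a1 a2 using cosh_plus_sinh[of s] e1 s by linarith
qed

lemma hyp_bound: "\<bar>s::real\<bar> \<le> 1/2 \<Longrightarrow> \<bar>cosh s - 1\<bar> + \<bar>sinh s\<bar> \<le> 3 * \<bar>s\<bar>"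
proof -
  assume "\<bar>s\<bar> \<le> 1/2"
  then have "\<bar>cosh \<bar>s\<bar> - 1\<bar> + \<bar>sinh \<bar>s\<bar>\<bar> \<le> 3 * \<bar>s\<bar>" by (intro hyp_bound_pos) auto
  then show ?thesis by simp
qed

lemma norm3_le: "x $ 1 ^ 2 + x $ 2 ^ 2 + x $ 3 ^ 2 \<le> y $ 1 ^ 2 + y $ 2 ^ 2 + y $ 3 ^ 2 \<Longrightarrow> norm x \<le> norm y"
  for x y :: vec3
  by (simp add: norm_le inner_vec_def sum_3 power2_eq_square)

lemma Mt_vec_diff: "norm (Mt s *v p - p) \<le> (\<bar>cosh s - 1\<bar> + \<bar>sinh s\<bar>) * norm p"
proof -
  define d :: vec3 where "d = (\<chi> i. if i = 3 then 0 else p $ i)"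
  define w :: vec3 where "w = (\<chi> i. if i = 1 then p $ 2 else if i = 2 then p $ 1 else 0)"
  have eq: "Mt s *v p - p = (cosh s - 1) *\<^sub>R d + sinh s *\<^sub>R w"
    by (simp add: vec3_eq_iff mvec_nth d_def w_def algebra_simps)
  have nd: "norm d \<le> norm p" by (rule norm3_le) (simp add: d_def)
  have nw: "norm w \<le> norm p" by (rule norm3_le) (simp add: w_def)
  have "norm (Mt s *v p - p) \<le> \<bar>cosh s - 1\<bar> * norm d + \<bar>sinh s\<bar> * norm w"
  proof -
    have "norm ((cosh s - 1) *\<^sub>R d + sinh s *\<^sub>R w) \<le> norm ((cosh s - 1) *\<^sub>R d) + norm (sinh s *\<^sub>R w)"
      by (rule norm_triangle_ineq)
    then show ?thesis unfolding eq by (simp only: norm_scaleR real_norm_def)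
  qed
  also have "\<dots> \<le> \<bar>cosh s - 1\<bar> * norm p + \<bar>sinh s\<bar> * norm p"
    by (intro add_mono mult_left_mono nd nw) auto
  finally show ?thesis by (simp only: distrib_right)
qed

lemma Mt_vec_diff_small: "\<bar>s\<bar> \<le> 1/2 \<Longrightarrow> norm (Mt s *v p - p) \<le> 3 * \<bar>s\<bar> * norm p"
  by (rule order_trans[OF Mt_vec_diff]) (intro mult_right_mono hyp_bound, auto)

lemma tendsto_Mt[tendsto_intros]: "(f \<longlongrightarrow> l) F \<Longrightarrow> ((\<lambda>x. Mt (f x)) \<longlongrightarrow> Mt l) F"
  unfolding Mt_decomp by (intro tendsto_intros)

lemma continuous_on_Mt: "continuous_on S Mt"
  by (simp add: continuous_on_def tendsto_Mt tendsto_ident_at)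

lemma Mt_has_vector_derivative: "((\<lambda>s. Mt (s * \<tau>)) has_vector_derivative \<tau> *\<^sub>R B1) (at 0)"
proof -
  have c0: "((\<lambda>s. cosh (s * \<tau>) - 1) has_real_derivative 0) (at 0)"
    by (auto intro!: derivative_eq_intros)
  have s0: "((\<lambda>s. sinh (s * \<tau>)) has_real_derivative \<tau>) (at 0)"
    by (auto intro!: derivative_eq_intros)
  have c: "((\<lambda>s. (cosh (s * \<tau>) - 1) *\<^sub>R Dm) has_vector_derivative 0 *\<^sub>R Dm) (at 0)"
    using bounded_linear.has_vector_derivative[OF bounded_linear_scaleR_left c0[unfolded has_real_derivative_iff_has_vector_derivative]] .
  have s: "((\<lambda>s. sinh (s * \<tau>) *\<^sub>R B1) has_vector_derivative \<tau> *\<^sub>R B1) (at 0)"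
    using bounded_linear.has_vector_derivative[OF bounded_linear_scaleR_left s0[unfolded has_real_derivative_iff_has_vector_derivative]] .
  have "((\<lambda>s. mat 1 + (cosh (s * \<tau>) - 1) *\<^sub>R Dm + sinh (s * \<tau>) *\<^sub>R B1) has_vector_derivative
      0 + 0 *\<^sub>R Dm + \<tau> *\<^sub>R B1) (at 0)"
    by (rule has_vector_derivative_add[OF has_vector_derivative_add[OF has_vector_derivative_const c] s])
  then show ?thesis unfolding Mt_decomp by simp
qed

fun pw :: "aff \<Rightarrow> nat \<Rightarrow> aff" where
  "pw g 0 = aff_one"
| "pw g (Suc k) = aff_mult g (pw g k)"

lemma mvec_sum: "A *v (\<Sum>j\<in>S. f j) = (\<Sum>j\<in>S. A *v f j)" for A :: mat3
proof (induction S rule: infinite_finite_induct)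
  case (insert x F)
  then show ?case by (simp add: matrix_vector_right_distrib)
qed simp_all

lemma pw_Mt: "pw (Mt t, p) k = (Mt (real k * t), \<Sum>j<k. Mt (real j * t) *v p)"
proof (induction k)
  case 0
  then show ?case by (simp add: aff_one_def)
next
  case (Suc k)
  have m: "Mt t ** Mt (real k * t) = Mt (real (Suc k) * t)"
    by (simp add: Mt_add[symmetric] algebra_simps)
  have v: "Mt t *v (\<Sum>j<k. Mt (real j * t) *v p) + p = (\<Sum>j<Suc k. Mt (real j * t) *v p)"
    unfolding sum.lessThan_Suc_shift mvec_sum
    by (simp add: matrix_vector_mul_assoc Mt_add[symmetric] algebra_simps)
  show ?case by (simp add: Suc aff_mult_def m v)
qed

lemma pw_est:
  assumes "real k * \<bar>t\<bar> \<le> 1/2"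
  shows "norm ((\<Sum>j<k. Mt (real j * t) *v p) - real k *\<^sub>R p) \<le> 3 * (real k * \<bar>t\<bar>) * (real k * norm p)"
proof -
  have "(\<Sum>j<k. Mt (real j * t) *v p) - real k *\<^sub>R p = (\<Sum>j<k. Mt (real j * t) *v p - p)"
    by (simp add: sum_subtractf sum_constant_scaleR del: sum_constant)
  also have "norm \<dots> \<le> (\<Sum>j<k. norm (Mt (real j * t) *v p - p))"
    by (rule norm_sum)
  also have "\<dots> \<le> (\<Sum>j<k. 3 * (real k * \<bar>t\<bar>) * norm p)"
  proof (rule sum_mono)
    fix j assume j: "j \<in> {..<k}"
    have jk: "\<bar>real j * t\<bar> \<le> real k * \<bar>t\<bar>"
      using j by (simp add: abs_mult mult_right_mono)
    have "norm (Mt (real j * t) *v p - p) \<le> 3 * \<bar>real j * t\<bar> * norm p"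
      by (rule Mt_vec_diff_small) (use jk assms in linarith)
    also have "\<dots> \<le> 3 * (real k * \<bar>t\<bar>) * norm p"
      using jk by (intro mult_right_mono) auto
    finally show "norm (Mt (real j * t) *v p - p) \<le> 3 * (real k * \<bar>t\<bar>) * norm p" .
  qed
  also have "\<dots> = 3 * (real k * \<bar>t\<bar>) * (real k * norm p)" by simp
  finally show ?thesis .
qed

lemma hvd_perturb:
  fixes \<gamma> f :: "real \<Rightarrow> 'a::real_normed_vector"
  assumes f: "(f has_vector_derivative d) (at 0)" and "\<delta> > 0"
    and b: "\<And>s. \<bar>s\<bar> \<le> \<delta> \<Longrightarrow> norm (\<gamma> s - f s) \<le> C * s\<^sup>2"
  shows "(\<gamma> has_vector_derivative d) (at 0)"
proof -
  define h where "h s = \<gamma> s - f s" for s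
  have h0: "h 0 = 0" using b[of 0] \<open>\<delta> > 0\<close> by (simp add: h_def)
  have "(h has_vector_derivative 0) (at 0)"
    unfolding has_vector_derivative_def has_derivative_at
  proof (intro conjI)
    show "bounded_linear (\<lambda>x. x *\<^sub>R (0::'a))" by (simp add: bounded_linear_zero)
    have ev: "\<forall>\<^sub>F x in at 0. norm (norm (h (0 + x) - h 0 - x *\<^sub>R 0) / norm x) \<le> \<bar>C\<bar> * \<bar>x\<bar>"
      unfolding eventually_at
    proof (intro exI[of _ \<delta>] conjI ballI impI)
      fix x :: real assume x: "x \<in> UNIV" "x \<noteq> 0 \<and> dist x 0 < \<delta>"
      have "norm (h x) \<le> C * x\<^sup>2" unfolding h_def by (rule b) (use x in auto)
      also have "\<dots> \<le> \<bar>C\<bar> * x\<^sup>2" by (rule mult_right_mono) auto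
      also have "\<dots> = \<bar>C\<bar> * \<bar>x\<bar> * \<bar>x\<bar>" by (simp add: power2_eq_square abs_mult_self_eq)
      finally have "norm (h x) / \<bar>x\<bar> \<le> \<bar>C\<bar> * \<bar>x\<bar>"
        using x by (simp add: divide_le_eq)
      then show "norm (norm (h (0 + x) - h 0 - x *\<^sub>R 0) / norm x) \<le> \<bar>C\<bar> * \<bar>x\<bar>"
        by (simp add: h0)
    qed (use \<open>\<delta> > 0\<close> in auto)
    have "((\<lambda>x::real. \<bar>C\<bar> * \<bar>x\<bar>) \<longlongrightarrow> \<bar>C\<bar> * \<bar>0\<bar>) (at 0)"
      by (intro tendsto_intros)
    then have "((\<lambda>x::real. \<bar>C\<bar> * \<bar>x\<bar>) \<longlongrightarrow> 0) (at 0)" by simp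
    then show "((\<lambda>x. norm (h (0 + x) - h 0 - x *\<^sub>R 0) / norm x) \<longlongrightarrow> 0) (at 0)"
      by (rule Lim_null_comparison[OF ev])
  qed
  from has_vector_derivative_add[OF f this] have "((\<lambda>s. f s + h s) has_vector_derivative d) (at 0)"
    by simp
  then show ?thesis by (simp add: h_def)
qed

locale Hgrp =
  fixes H :: "aff set"
  assumes Hmult: "\<And>g h. g \<in> H \<Longrightarrow> h \<in> H \<Longrightarrow> aff_mult g h \<in> H"
    and Hone: "aff_one \<in> H"
    and Hinv: "\<And>t a. (Mt t, a) \<in> H \<Longrightarrow> (Mt (-t), -(Mt (-t) *v a)) \<in> H"
    and Hfst: "\<And>g. g \<in> H \<Longrightarrow> \<exists>t. fst g = Mt t"
    and Hsurj: "\<And>t. \<exists>a. (Mt t, a) \<in> H"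
    and Hclosed: "closed H" and Hconn: "connected H"
begin

lemma pw_in: "g \<in> H \<Longrightarrow> pw g k \<in> H"
  by (induction k) (auto intro: Hmult simp: Hone)

lemma inv0: "(mat 1, b) \<in> H \<Longrightarrow> (mat 1, -b) \<in> H"
  using Hinv[of 0 b] by simp

lemma small_elem:
  assumes e: "\<epsilon> > 0"
  shows "\<exists>t a. (Mt t, a) \<in> H \<and> t \<noteq> 0 \<and> \<bar>t\<bar> < \<epsilon> \<and> norm a < \<epsilon>"
proof (rule ccontr)
  assume no: "\<not> ?thesis"
  define K where "K = {g \<in> H. fst g = mat 1}"
  define T where "T = (\<Union>h\<in>K. ball h \<epsilon>)"
  have KT: "K = H \<inter> T"
  proof
    show "K \<subseteq> H \<inter> T" using e by (auto simp: K_def T_def)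
    show "H \<inter> T \<subseteq> K"
    proof
      fix g assume g: "g \<in> H \<inter> T"
      then obtain h where h: "h \<in> K" "dist h g < \<epsilon>" by (auto simp: T_def)
      obtain t where t: "fst g = Mt t" using Hfst g by blast
      obtain b where hb: "h = (mat 1, b)" "(mat 1, b) \<in> H" using h(1) unfolding K_def by (cases h) auto
      have gH: "(Mt t, snd g) \<in> H" using g t by (cases g) auto
      have "aff_mult (mat 1, -b) (Mt t, snd g) \<in> H"
        by (rule Hmult[OF inv0[OF hb(2)] gH])
      then have in1: "(Mt t, snd g - b) \<in> H" by (simp add: aff_mult_def)
      have "\<bar>t\<bar> \<le> norm (Mt t - mat 1)" by (rule abs_le_norm_Mt)
      also have "\<dots> = dist (fst h) (fst g)" by (simp add: hb t dist_norm norm_minus_commute)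
      also have "\<dots> \<le> dist h g" by (rule dist_fst_le)
      finally have t1: "\<bar>t\<bar> < \<epsilon>" using h by linarith
      have "norm (snd g - b) = dist (snd h) (snd g)" by (simp add: hb dist_norm norm_minus_commute)
      also have "\<dots> \<le> dist h g" by (rule dist_snd_le)
      finally have t2: "norm (snd g - b) < \<epsilon>" using h by linarith
      have "t = 0" using no in1 t1 t2 by blast
      then show "g \<in> K" using g t by (simp add: K_def)
    qed
  qed
  have op: "openin (top_of_set H) K"
  proof -
    have "open T" unfolding T_def by (intro open_UN ballI open_ball)
    then show ?thesis unfolding openin_open using KT by blast
  qed
  have "closed {g :: aff. fst g = mat 1}"
    by (intro closed_Collect_eq continuous_intros)
  then have cl: "closedin (top_of_set H) K"
  proof -
    have "K = H \<inter> {g :: aff. fst g = mat 1}" by (auto simp: K_def)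
    then show ?thesis using closedin_closed_Int[of "{g :: aff. fst g = mat 1}" H] \<open>closed _\<close> by simp
  qed
  have "K = {} \<or> K = H" using Hconn op cl unfolding connected_clopen by blast
  moreover have "aff_one \<in> K" using Hone by (simp add: K_def aff_one_def)
  ultimately have KH: "K = H" by auto
  obtain a where "(Mt 1, a) \<in> H" using Hsurj by blast
  then have "(Mt 1, a) \<in> K" using KH by simp
  then have "Mt 1 = mat 1" by (simp add: K_def)
  then show False by (simp add: Mt_eq_1_iff)
qed

definition U :: "vec3 set" where "U = {u. \<forall>s. (mat 1, s *\<^sub>R u) \<in> H}"

lemma subspace_U: "subspace U"
  unfolding subspace_def U_def
proof (intro conjI ballI allI CollectI)
  show "(mat 1, s *\<^sub>R 0) \<in> H" for s using Hone by (simp add: aff_one_def)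
next
  fix x y s assume x: "x \<in> {u. \<forall>s. (mat 1, s *\<^sub>R u) \<in> H}" and y: "y \<in> {u. \<forall>s. (mat 1, s *\<^sub>R u) \<in> H}"
  have "aff_mult (mat 1, s *\<^sub>R x) (mat 1, s *\<^sub>R y) \<in> H" using x y by (auto intro: Hmult)
  then show "(mat 1, s *\<^sub>R (x + y)) \<in> H" by (simp add: aff_mult_def scaleR_right_distrib add.commute)
next
  fix c x s assume x: "x \<in> {u. \<forall>s. (mat 1, s *\<^sub>R u) \<in> H}"
  then have "(mat 1, (s * c) *\<^sub>R x) \<in> H" by blast
  then show "(mat 1, s *\<^sub>R c *\<^sub>R x) \<in> H" by simp
qed

lemma decomp:
  assumes "(Mt t, a) \<in> H"
  shows "\<exists>p. (Mt t, p) \<in> H \<and> norm p \<le> norm a \<and> (\<forall>u\<in>U. inner p u = 0)"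
proof -
  obtain y z where y: "y \<in> span U" and z: "\<And>w. w \<in> span U \<Longrightarrow> orthogonal z w" and a: "a = y + z"
    using orthogonal_subspace_decomp_exists[of U a] by blast
  have sU: "span U = U" using subspace_U by simp
  have yU: "y \<in> U" using y sU by simp
  have "(mat 1, (-1) *\<^sub>R y) \<in> H" using yU unfolding U_def by blast
  then have "aff_mult (mat 1, - y) (Mt t, a) \<in> H" using assms by (auto intro: Hmult)
  then have zH: "(Mt t, z) \<in> H" by (simp add: aff_mult_def a)
  have "orthogonal y z" using z[OF y] by (simp add: orthogonal_commute)
  then have "(norm a)\<^sup>2 = (norm y)\<^sup>2 + (norm z)\<^sup>2" unfolding a by (rule norm_add_Pythagorean)
  then have "(norm z)\<^sup>2 \<le> (norm a)\<^sup>2" by simp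
  then have nz: "norm z \<le> norm a" by (rule power2_le_imp_le) simp
  have "\<forall>u\<in>U. inner z u = 0" using z sU by (simp add: orthogonal_def)
  then show ?thesis using zH nz by blast
qed

end

lemma lim_k:
  assumes R: "\<And>n. R n > 0" "R \<longlonglongrightarrow> 0" and s: "s \<ge> 0"
  shows "(\<lambda>n. real (nat \<lfloor>s / R n\<rfloor>) * R n) \<longlonglongrightarrow> s"
proof (rule tendsto_sandwich[of "\<lambda>n. s - R n" _ _ "\<lambda>n. s"])
  have b: "s - R n \<le> real (nat \<lfloor>s / R n\<rfloor>) * R n \<and> real (nat \<lfloor>s / R n\<rfloor>) * R n \<le> s" for n
  proof -
    have nn: "0 \<le> s / R n" using s R(1)[of n] by simp
    have k: "real (nat \<lfloor>s / R n\<rfloor>) = of_int \<lfloor>s / R n\<rfloor>" using nn by simp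
    have f1: "s / R n - 1 \<le> of_int \<lfloor>s / R n\<rfloor>" by linarith
    have f2: "of_int \<lfloor>s / R n\<rfloor> \<le> s / R n" by linarith
    have "(s / R n - 1) * R n \<le> of_int \<lfloor>s / R n\<rfloor> * R n"
      using f1 R(1)[of n] by (intro mult_right_mono) auto
    moreover have "of_int \<lfloor>s / R n\<rfloor> * R n \<le> (s / R n) * R n"
      using f2 R(1)[of n] by (intro mult_right_mono) auto
    ultimately show ?thesis using R(1)[of n] by (simp add: k algebra_simps)
  qed
  show "\<forall>\<^sub>F n in sequentially. s - R n \<le> real (nat \<lfloor>s / R n\<rfloor>) * R n" using b by simp
  show "\<forall>\<^sub>F n in sequentially. real (nat \<lfloor>s / R n\<rfloor>) * R n \<le> s" using b by simp
  show "(\<lambda>n. s - R n) \<longlonglongrightarrow> s" using tendsto_diff[OF tendsto_const R(2), of s] by simp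
  show "(\<lambda>n. s) \<longlonglongrightarrow> s" by simp
qed

context Hgrp begin

lemma seq_lims:
  assumes R: "\<And>n. R n > 0" "R \<longlonglongrightarrow> 0"
    and tau: "(\<lambda>n. T n / R n) \<longlonglongrightarrow> \<tau>" and v: "(\<lambda>n. P n /\<^sub>R R n) \<longlonglongrightarrow> v" and s: "s \<ge> 0"
  shows "(\<lambda>n. real (nat \<lfloor>s / R n\<rfloor>) * T n) \<longlonglongrightarrow> s * \<tau>"
    "(\<lambda>n. real (nat \<lfloor>s / R n\<rfloor>) *\<^sub>R P n) \<longlonglongrightarrow> s *\<^sub>R v"
    "(\<lambda>n. real (nat \<lfloor>s / R n\<rfloor>) * \<bar>T n\<bar>) \<longlonglongrightarrow> s * \<bar>\<tau>\<bar>"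
    "(\<lambda>n. real (nat \<lfloor>s / R n\<rfloor>) * norm (P n)) \<longlonglongrightarrow> s * norm v"
proof -
  define k where "k n = real (nat \<lfloor>s / R n\<rfloor>)" for n
  have kR: "(\<lambda>n. k n * R n) \<longlonglongrightarrow> s" unfolding k_def by (rule lim_k[OF R s])
  have e1: "k n * T n = (k n * R n) * (T n / R n)" for n using R(1)[of n] by simp
  have e2: "k n *\<^sub>R P n = (k n * R n) *\<^sub>R (P n /\<^sub>R R n)" for n using R(1)[of n] by simp
  have k0: "k n \<ge> 0" for n by (simp add: k_def)
  have eq1: "(\<lambda>n. k n * T n) = (\<lambda>n. (k n * R n) * (T n / R n))" by (rule ext) (rule e1)
  have eq2: "(\<lambda>n. k n *\<^sub>R P n) = (\<lambda>n. (k n * R n) *\<^sub>R (P n /\<^sub>R R n))" by (rule ext) (rule e2)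
  show t1: "(\<lambda>n. real (nat \<lfloor>s / R n\<rfloor>) * T n) \<longlonglongrightarrow> s * \<tau>"
    unfolding k_def[symmetric] eq1 by (rule tendsto_mult[OF kR tau])
  show t2: "(\<lambda>n. real (nat \<lfloor>s / R n\<rfloor>) *\<^sub>R P n) \<longlonglongrightarrow> s *\<^sub>R v"
    unfolding k_def[symmetric] eq2 by (rule tendsto_scaleR[OF kR v])
  have "(\<lambda>n. \<bar>real (nat \<lfloor>s / R n\<rfloor>) * T n\<bar>) \<longlonglongrightarrow> \<bar>s * \<tau>\<bar>" by (rule tendsto_rabs[OF t1])
  then show "(\<lambda>n. real (nat \<lfloor>s / R n\<rfloor>) * \<bar>T n\<bar>) \<longlonglongrightarrow> s * \<bar>\<tau>\<bar>"
    using s by (simp add: abs_mult)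
  have "(\<lambda>n. norm (real (nat \<lfloor>s / R n\<rfloor>) *\<^sub>R P n)) \<longlonglongrightarrow> norm (s *\<^sub>R v)" by (rule tendsto_norm[OF t2])
  then show "(\<lambda>n. real (nat \<lfloor>s / R n\<rfloor>) * norm (P n)) \<longlonglongrightarrow> s * norm v"
    using s by simp
qed

lemma seq_est:
  assumes inH: "\<And>n. (Mt (T n), P n) \<in> H" and R: "\<And>n. R n > 0" "R \<longlonglongrightarrow> 0"
    and tau: "(\<lambda>n. T n / R n) \<longlonglongrightarrow> \<tau>" and v: "(\<lambda>n. P n /\<^sub>R R n) \<longlonglongrightarrow> v" and s: "s \<ge> 0"
    and st: "s * \<bar>\<tau>\<bar> < 1/2"
  shows "\<forall>\<^sub>F n in sequentially.
     norm (snd (pw (Mt (T n), P n) (nat \<lfloor>s / R n\<rfloor>)) - real (nat \<lfloor>s / R n\<rfloor>) *\<^sub>R P n)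
       \<le> 3 * (real (nat \<lfloor>s / R n\<rfloor>) * \<bar>T n\<bar>) * (real (nat \<lfloor>s / R n\<rfloor>) * norm (P n))"
proof -
  have "\<forall>\<^sub>F n in sequentially. real (nat \<lfloor>s / R n\<rfloor>) * \<bar>T n\<bar> < 1/2"
    using order_tendstoD(2)[OF seq_lims(3)[OF R tau v s] st] .
  then show ?thesis
  proof (rule eventually_mono)
    fix n assume "real (nat \<lfloor>s / R n\<rfloor>) * \<bar>T n\<bar> < 1/2"
    then show "norm (snd (pw (Mt (T n), P n) (nat \<lfloor>s / R n\<rfloor>)) - real (nat \<lfloor>s / R n\<rfloor>) *\<^sub>R P n)
       \<le> 3 * (real (nat \<lfloor>s / R n\<rfloor>) * \<bar>T n\<bar>) * (real (nat \<lfloor>s / R n\<rfloor>) * norm (P n))"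
      unfolding pw_Mt snd_conv by (intro pw_est) simp
  qed
qed

lemma tau0_case:
  assumes inH: "\<And>n. (Mt (T n), P n) \<in> H" and R: "\<And>n. R n > 0" "R \<longlonglongrightarrow> 0"
    and tau: "(\<lambda>n. T n / R n) \<longlonglongrightarrow> 0" and v: "(\<lambda>n. P n /\<^sub>R R n) \<longlonglongrightarrow> v" and s: "s \<ge> 0"
  shows "(mat 1, s *\<^sub>R v) \<in> H"
proof -
  define k where "k n = nat \<lfloor>s / R n\<rfloor>" for n
  define g where "g n = pw (Mt (T n), P n) (k n)" for n
  have gH: "g n \<in> H" for n unfolding g_def by (rule pw_in[OF inH])
  have l1: "(\<lambda>n. real (k n) * T n) \<longlonglongrightarrow> 0"
    using seq_lims(1)[OF R tau v s] by (simp add: k_def)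
  have l2: "(\<lambda>n. real (k n) *\<^sub>R P n) \<longlonglongrightarrow> s *\<^sub>R v"
    using seq_lims(2)[OF R tau v s] by (simp add: k_def)
  have l3: "(\<lambda>n. real (k n) * \<bar>T n\<bar>) \<longlonglongrightarrow> 0"
    using seq_lims(3)[OF R tau v s] by (simp add: k_def)
  have l4: "(\<lambda>n. real (k n) * norm (P n)) \<longlonglongrightarrow> s * norm v"
    using seq_lims(4)[OF R tau v s] by (simp add: k_def)
  have est: "\<forall>\<^sub>F n in sequentially. norm (snd (g n) - real (k n) *\<^sub>R P n)
       \<le> 3 * (real (k n) * \<bar>T n\<bar>) * (real (k n) * norm (P n))"
    using seq_est[OF inH R tau v s] s by (simp add: k_def g_def)
  have "(\<lambda>n. 3 * (real (k n) * \<bar>T n\<bar>) * (real (k n) * norm (P n))) \<longlonglongrightarrow> 3 * 0 * (s * norm v)"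
    by (intro tendsto_mult tendsto_const l3 l4)
  then have "(\<lambda>n. snd (g n) - real (k n) *\<^sub>R P n) \<longlonglongrightarrow> 0"
    using Lim_null_comparison[OF est] by simp
  from tendsto_add[OF this l2] have sn: "(\<lambda>n. snd (g n)) \<longlonglongrightarrow> s *\<^sub>R v" by simp
  have fn: "(\<lambda>n. fst (g n)) \<longlonglongrightarrow> mat 1"
    using tendsto_Mt[OF l1] by (simp add: g_def pw_Mt)
  have "(\<lambda>n. (fst (g n), snd (g n))) \<longlonglongrightarrow> (mat 1, s *\<^sub>R v)" by (rule tendsto_Pair[OF fn sn])
  then have "g \<longlonglongrightarrow> (mat 1, s *\<^sub>R v)" by simp
  then show ?thesis by (rule closed_sequentially[OF Hclosed, of g, OF gH])
qed

end

context Hgrp begin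

lemma approx_case:
  assumes inH: "\<And>n. (Mt (T n), P n) \<in> H" and R: "\<And>n. R n > 0" "R \<longlonglongrightarrow> 0"
    and tau: "(\<lambda>n. T n / R n) \<longlonglongrightarrow> \<tau>" and v: "(\<lambda>n. P n /\<^sub>R R n) \<longlonglongrightarrow> v"
    and s: "0 < s" "s \<le> 1/4" and bt: "\<bar>\<tau>\<bar> \<le> 1" and bv: "norm v \<le> 1"
  shows "\<exists>g\<in>H. norm (g - (Mt (s * \<tau>), s *\<^sub>R v)) \<le> 5 * s\<^sup>2"
proof -
  define k where "k n = nat \<lfloor>s / R n\<rfloor>" for n
  define g where "g n = pw (Mt (T n), P n) (k n)" for n
  have s0: "s \<ge> 0" using s by simp
  have st: "s * \<bar>\<tau>\<bar> < 1/2"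
  proof -
    have "s * \<bar>\<tau>\<bar> \<le> s * 1" by (rule mult_left_mono[OF bt s0])
    then show ?thesis using s by linarith
  qed
  have s2: "s\<^sup>2 > 0" using s by simp
  have E1: "\<forall>\<^sub>F n in sequentially. dist (Mt (real (k n) * T n)) (Mt (s * \<tau>)) < s\<^sup>2"
    using tendstoD[OF tendsto_Mt[OF seq_lims(1)[OF R tau v s0]] s2] by (simp add: k_def)
  have E2: "\<forall>\<^sub>F n in sequentially. dist (real (k n) *\<^sub>R P n) (s *\<^sub>R v) < s\<^sup>2 / 2"
    using tendstoD[OF seq_lims(2)[OF R tau v s0], of "s\<^sup>2 / 2"] s2 by (simp add: k_def)
  have l34: "(\<lambda>n. 3 * (real (k n) * \<bar>T n\<bar>) * (real (k n) * norm (P n))) \<longlonglongrightarrow> 3 * (s * \<bar>\<tau>\<bar>) * (s * norm v)"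
    unfolding k_def by (intro tendsto_mult tendsto_const seq_lims(3,4)[OF R tau v s0])
  have E3: "\<forall>\<^sub>F n in sequentially. 3 * (real (k n) * \<bar>T n\<bar>) * (real (k n) * norm (P n)) < 3 * (s * \<bar>\<tau>\<bar>) * (s * norm v) + s\<^sup>2 / 2"
    using order_tendstoD(2)[OF l34, of "3 * (s * \<bar>\<tau>\<bar>) * (s * norm v) + s\<^sup>2 / 2"] s2 by simp
  have E4: "\<forall>\<^sub>F n in sequentially. norm (snd (g n) - real (k n) *\<^sub>R P n)
       \<le> 3 * (real (k n) * \<bar>T n\<bar>) * (real (k n) * norm (P n))"
    using seq_est[OF inH R tau v s0 st] by (simp add: k_def g_def)
  have "\<forall>\<^sub>F n in sequentially. dist (Mt (real (k n) * T n)) (Mt (s * \<tau>)) < s\<^sup>2 \<and>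
      dist (real (k n) *\<^sub>R P n) (s *\<^sub>R v) < s\<^sup>2 / 2 \<and>
      3 * (real (k n) * \<bar>T n\<bar>) * (real (k n) * norm (P n)) < 3 * (s * \<bar>\<tau>\<bar>) * (s * norm v) + s\<^sup>2 / 2 \<and>
      norm (snd (g n) - real (k n) *\<^sub>R P n) \<le> 3 * (real (k n) * \<bar>T n\<bar>) * (real (k n) * norm (P n))"
    using E1 E2 E3 E4 by (intro eventually_conj)
  then obtain N where N: "\<forall>n\<ge>N. dist (Mt (real (k n) * T n)) (Mt (s * \<tau>)) < s\<^sup>2 \<and>
      dist (real (k n) *\<^sub>R P n) (s *\<^sub>R v) < s\<^sup>2 / 2 \<and>
      3 * (real (k n) * \<bar>T n\<bar>) * (real (k n) * norm (P n)) < 3 * (s * \<bar>\<tau>\<bar>) * (s * norm v) + s\<^sup>2 / 2 \<and>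
      norm (snd (g n) - real (k n) *\<^sub>R P n) \<le> 3 * (real (k n) * \<bar>T n\<bar>) * (real (k n) * norm (P n))"
    unfolding eventually_sequentially by blast
  then have N1: "dist (Mt (real (k N) * T N)) (Mt (s * \<tau>)) < s\<^sup>2"
    and N2: "dist (real (k N) *\<^sub>R P N) (s *\<^sub>R v) < s\<^sup>2 / 2"
    and N3: "3 * (real (k N) * \<bar>T N\<bar>) * (real (k N) * norm (P N)) < 3 * (s * \<bar>\<tau>\<bar>) * (s * norm v) + s\<^sup>2 / 2"
    and N4: "norm (snd (g N) - real (k N) *\<^sub>R P N) \<le> 3 * (real (k N) * \<bar>T N\<bar>) * (real (k N) * norm (P N))"
    by auto
  have fg: "fst (g N) = Mt (real (k N) * T N)" by (simp add: g_def pw_Mt)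
  have tv: "(s * \<bar>\<tau>\<bar>) * (s * norm v) \<le> s * s"
    using bt bv s0 by (intro mult_mono) (auto intro: mult_left_le)
  have "norm (snd (g N) - s *\<^sub>R v) \<le> norm (snd (g N) - real (k N) *\<^sub>R P N) + norm (real (k N) *\<^sub>R P N - s *\<^sub>R v)"
    by (rule norm_diff_triangle_le[of _ "real (k N) *\<^sub>R P N"]) simp_all
  also have "\<dots> \<le> 4 * s\<^sup>2" using N2 N3 N4 tv by (simp add: dist_norm power2_eq_square)
  finally have b2: "norm (snd (g N) - s *\<^sub>R v) \<le> 4 * s\<^sup>2" .
  have b1: "norm (fst (g N) - Mt (s * \<tau>)) \<le> s\<^sup>2" using N1 fg by (simp add: dist_norm)
  have "norm (g N - (Mt (s * \<tau>), s *\<^sub>R v)) = norm (fst (g N) - Mt (s * \<tau>), snd (g N) - s *\<^sub>R v)"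
    by (cases "g N") simp
  also have "\<dots> \<le> norm (fst (g N) - Mt (s * \<tau>)) + norm (snd (g N) - s *\<^sub>R v)" by (rule norm_Pair_le)
  also have "\<dots> \<le> 5 * s\<^sup>2" using b1 b2 by simp
  finally show ?thesis using pw_in[OF inH] unfolding g_def by blast
qed

end

context Hgrp begin

lemma exists_xi: "\<exists>\<xi>\<in>lie_alg H. fst \<xi> \<noteq> 0"
proof -
  have "\<forall>n. \<exists>t p. (Mt t, p) \<in> H \<and> t \<noteq> 0 \<and> \<bar>t\<bar> < inverse (real (Suc n)) \<and> norm p < inverse (real (Suc n))
      \<and> (\<forall>u\<in>U. inner p u = 0)"
  proof
    fix n
    have "inverse (real (Suc n)) > 0" by simp
    from small_elem[OF this] obtain t a where ta: "(Mt t, a) \<in> H" "t \<noteq> 0" "\<bar>t\<bar> < inverse (real (Suc n))"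
      "norm a < inverse (real (Suc n))" by blast
    from decomp[OF ta(1)] obtain p where "(Mt t, p) \<in> H" "norm p \<le> norm a" "\<forall>u\<in>U. inner p u = 0" by blast
    then show "\<exists>t p. (Mt t, p) \<in> H \<and> t \<noteq> 0 \<and> \<bar>t\<bar> < inverse (real (Suc n)) \<and> norm p < inverse (real (Suc n))
      \<and> (\<forall>u\<in>U. inner p u = 0)" using ta by (intro exI[of _ t] exI[of _ p]) auto
  qed
  then obtain T P where TP: "\<And>n. (Mt (T n), P n) \<in> H" "\<And>n. T n \<noteq> 0"
    "\<And>n. \<bar>T n\<bar> < inverse (real (Suc n))" "\<And>n. norm (P n) < inverse (real (Suc n))"
    "\<And>n. \<forall>u\<in>U. inner (P n) u = 0"
    by metis
  define r where "r n = norm (T n, P n)" for n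
  have rpos: "r n > 0" for n using TP(2)[of n] by (simp add: r_def zero_prod_def)
  have r0: "r \<longlonglongrightarrow> 0"
  proof (rule Lim_null_comparison)
    show "\<forall>\<^sub>F n in sequentially. norm (r n) \<le> 2 * inverse (real (Suc n))"
    proof (intro always_eventually allI)
      fix n
      have "r n \<le> norm (T n) + norm (P n)" unfolding r_def by (rule norm_Pair_le)
      then show "norm (r n) \<le> 2 * inverse (real (Suc n))" using TP(3,4)[of n] rpos[of n] by simp
    qed
    show "(\<lambda>n. 2 * inverse (real (Suc n))) \<longlonglongrightarrow> 0"
      using tendsto_mult[OF tendsto_const LIMSEQ_inverse_real_of_nat, of 2] by simp
  qed
  define z where "z n = (T n / r n, P n /\<^sub>R r n)" for n
  have zs: "z n \<in> sphere 0 1" for n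
  proof -
    have e: "z n = inverse (r n) *\<^sub>R (T n, P n)" by (simp add: z_def divide_inverse mult.commute)
    have "norm (z n) = \<bar>inverse (r n)\<bar> * norm (T n, P n)" unfolding e by (rule norm_scaleR)
    then have "norm (z n) = \<bar>inverse (r n)\<bar> * r n" by (simp only: r_def)
    then show ?thesis using rpos[of n] by simp
  qed
  obtain l \<sigma> where l: "l \<in> sphere 0 1" and sm: "strict_mono \<sigma>" and zl: "(z \<circ> \<sigma>) \<longlonglongrightarrow> l"
    using seq_compactE[OF compact_imp_seq_compact[OF compact_sphere], of z 0 1] zs by blast
  obtain \<tau> v where lv: "l = (\<tau>, v)" by (cases l)
  have n1: "norm (\<tau>, v) = 1" using l lv by simp
  have bt: "\<bar>\<tau>\<bar> \<le> 1" using norm_fst_le[of \<tau> v] n1 by simp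
  have bv: "norm v \<le> 1" using norm_snd_le[of v \<tau>] n1 by simp
  define R where "R n = r (\<sigma> n)" for n
  define T' where "T' n = T (\<sigma> n)" for n
  define P' where "P' n = P (\<sigma> n)" for n
  have inH: "(Mt (T' n), P' n) \<in> H" for n unfolding T'_def P'_def by (rule TP(1))
  have Rpos: "R n > 0" for n unfolding R_def by (rule rpos)
  have R0: "R \<longlonglongrightarrow> 0"
  proof -
    have "R = r \<circ> \<sigma>" by (rule ext) (simp add: R_def)
    then show ?thesis using LIMSEQ_subseq_LIMSEQ[OF r0 sm] by simp
  qed
  have tau: "(\<lambda>n. T' n / R n) \<longlonglongrightarrow> \<tau>"
    using tendsto_fst[OF zl] by (simp add: lv z_def T'_def R_def o_def)
  have vv: "(\<lambda>n. P' n /\<^sub>R R n) \<longlonglongrightarrow> v"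
    using tendsto_snd[OF zl] by (simp add: lv z_def P'_def R_def o_def)
  show ?thesis
  proof (cases "\<tau> = 0")
    case True
    have pos: "(mat 1, s *\<^sub>R v) \<in> H" if "s \<ge> 0" for s
      using tau0_case[OF inH Rpos R0 _ vv that] tau True by simp
    have "v \<in> U" unfolding U_def
    proof (intro CollectI allI)
      fix s :: real
      show "(mat 1, s *\<^sub>R v) \<in> H"
      proof (cases "s \<ge> 0")
        case True then show ?thesis by (rule pos)
      next
        case False
        then have "(mat 1, (- s) *\<^sub>R v) \<in> H" by (intro pos) simp
        from inv0[OF this] show ?thesis by simp
      qed
    qed
    then have ev: "inner (P' n /\<^sub>R R n) v = 0" for n using TP(5)[of "\<sigma> n"] by (simp add: P'_def)
    have "(\<lambda>n. inner (P' n /\<^sub>R R n) v) \<longlonglongrightarrow> 0" by (simp only: ev tendsto_const)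
    moreover have "(\<lambda>n. inner (P' n /\<^sub>R R n) v) \<longlonglongrightarrow> inner v v" by (intro tendsto_inner vv tendsto_const)
    ultimately have "inner v v = 0" using LIMSEQ_unique by blast
    then have "v = 0" by simp
    then show ?thesis using n1 True by simp
  next
    case False
    have T'0: "T' \<longlonglongrightarrow> 0"
    proof -
      have "(\<lambda>n. (T' n / R n) * R n) \<longlonglongrightarrow> \<tau> * 0" by (rule tendsto_mult[OF tau R0])
      moreover have "(T' n / R n) * R n = T' n" for n using Rpos[of n] by simp
      ultimately show ?thesis by simp
    qed
    define T2 where "T2 n = - T' n" for n
    define P2 where "P2 n = - (Mt (- T' n) *v P' n)" for n
    have inH2: "(Mt (T2 n), P2 n) \<in> H" for n unfolding T2_def P2_def by (rule Hinv[OF inH])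
    have tau2: "(\<lambda>n. T2 n / R n) \<longlonglongrightarrow> - \<tau>" unfolding T2_def using tendsto_minus[OF tau] by simp
    have vv2: "(\<lambda>n. P2 n /\<^sub>R R n) \<longlonglongrightarrow> - v"
    proof -
      define x where "x n = P' n /\<^sub>R R n" for n
      have eq: "P2 n /\<^sub>R R n = - (x n + (Mt (- T' n) *v x n - x n))" for n
        by (simp add: P2_def x_def algebra_simps)
      have "(\<lambda>n. Mt (- T' n) *v x n - x n) \<longlonglongrightarrow> 0"
      proof (rule Lim_null_comparison)
        show "\<forall>\<^sub>F n in sequentially. norm (Mt (- T' n) *v x n - x n) \<le> (\<bar>cosh (- T' n) - 1\<bar> + \<bar>sinh (- T' n)\<bar>) * norm (x n)"
          by (intro always_eventually allI Mt_vec_diff)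
        have "(\<lambda>n. (\<bar>cosh (- T' n) - 1\<bar> + \<bar>sinh (- T' n)\<bar>) * norm (x n)) \<longlonglongrightarrow> (\<bar>cosh (- 0) - 1\<bar> + \<bar>sinh (- 0)\<bar>) * norm v"
          unfolding x_def by (intro tendsto_intros T'0 vv)
        then show "(\<lambda>n. (\<bar>cosh (- T' n) - 1\<bar> + \<bar>sinh (- T' n)\<bar>) * norm (x n)) \<longlonglongrightarrow> 0" by simp
      qed
      then have "(\<lambda>n. - (x n + (Mt (- T' n) *v x n - x n))) \<longlonglongrightarrow> - (v + 0)"
        unfolding x_def by (intro tendsto_minus tendsto_add vv)
      then show ?thesis unfolding eq by simp
    qed
    have bt2: "\<bar>- \<tau>\<bar> \<le> 1" using bt by simp
    have bv2: "norm (- v) \<le> 1" using bv by simp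
    define gp where "gp s = (SOME g. g \<in> H \<and> norm (g - (Mt (s * \<tau>), s *\<^sub>R v)) \<le> 5 * s\<^sup>2)" for s
    define gm where "gm s = (SOME g. g \<in> H \<and> norm (g - (Mt (s * - \<tau>), s *\<^sub>R - v)) \<le> 5 * s\<^sup>2)" for s
    have gp: "gp s \<in> H \<and> norm (gp s - (Mt (s * \<tau>), s *\<^sub>R v)) \<le> 5 * s\<^sup>2" if "0 < s" "s \<le> 1/4" for s
      unfolding gp_def using approx_case[OF inH Rpos R0 tau vv that bt bv] by (rule someI2_bex) 
    have gm: "gm s \<in> H \<and> norm (gm s - (Mt (s * - \<tau>), s *\<^sub>R - v)) \<le> 5 * s\<^sup>2" if "0 < s" "s \<le> 1/4" for s
      unfolding gm_def using approx_case[OF inH2 Rpos R0 tau2 vv2 that bt2 bv2] by (rule someI2_bex)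
    define \<gamma> where "\<gamma> s = (if 0 < s \<and> s \<le> 1/4 then gp s else if -1/4 \<le> s \<and> s < 0 then gm (- s) else aff_one)" for s
    have \<gamma>H: "\<gamma> s \<in> H" for s unfolding \<gamma>_def using gp gm Hone by auto
    have \<gamma>0: "\<gamma> 0 = aff_one" by (simp add: \<gamma>_def)
    define f where "f s = (Mt (s * \<tau>), s *\<^sub>R v)" for s
    have fd: "(f has_vector_derivative (\<tau> *\<^sub>R B1, v)) (at 0)"
    proof -
      have "((\<lambda>s. s *\<^sub>R v) has_vector_derivative 1 *\<^sub>R v) (at 0)"
        using bounded_linear.has_vector_derivative[OF bounded_linear_scaleR_left has_vector_derivative_id] .
      then show ?thesis unfolding f_def by (intro has_vector_derivative_Pair Mt_has_vector_derivative) simp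
    qed
    have "(\<gamma> has_vector_derivative (\<tau> *\<^sub>R B1, v)) (at 0)"
    proof (rule hvd_perturb[OF fd, of "1/4"])
      fix s :: real assume s: "\<bar>s\<bar> \<le> 1/4"
      show "norm (\<gamma> s - f s) \<le> 5 * s\<^sup>2"
      proof (cases "s > 0")
        case True
        then show ?thesis using gp[of s] s by (simp add: \<gamma>_def f_def)
      next
        case False
        show ?thesis
        proof (cases "s = 0")
          case True
          then show ?thesis by (simp add: \<gamma>_def f_def aff_one_def)
        next
          case False
          then have sn: "s < 0" using \<open>\<not> s > 0\<close> by simp
          have "norm (gm (- s) - (Mt (- s * - \<tau>), - s *\<^sub>R - v)) \<le> 5 * (- s)\<^sup>2"
            using gm[of "- s"] sn s by simp
          then show ?thesis using sn s by (simp add: \<gamma>_def f_def)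
        qed
      qed
    qed simp
    then have "(\<tau> *\<^sub>R B1, v) \<in> lie_alg H" unfolding lie_alg_def using \<gamma>H \<gamma>0 by blast
    moreover have "\<tau> *\<^sub>R B1 \<noteq> 0"
    proof
      assume a: "\<tau> *\<^sub>R B1 = 0"
      have "B1 \<noteq> 0"
      proof
        assume "B1 = 0"
        then have "B1 $ 1 $ 2 = 0" by simp
        then show False by simp
      qed
      then show False using a \<open>\<tau> \<noteq> 0\<close> by simp
    qed
    ultimately show ?thesis by force
  qed
qed

end

lemma bilinear_mm: "bounded_bilinear ((**) :: mat3 \<Rightarrow> mat3 \<Rightarrow> mat3)"
  unfolding bilinear_conv_bounded_bilinear[symmetric] bilinear_def linear_iff
  by (simp add: vec_eq_iff matrix_matrix_mult_def distrib_left distrib_right sum.distrib sum_distrib_left mult_ac)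

lemma bilinear_mv: "bounded_bilinear ((*v) :: mat3 \<Rightarrow> vec3 \<Rightarrow> vec3)"
  unfolding bilinear_conv_bounded_bilinear[symmetric] bilinear_def linear_iff
  by (simp add: vec_eq_iff matrix_vector_mult_def distrib_left distrib_right sum.distrib sum_distrib_left mult_ac)

lemma mv_neg: "A *v (- x) = - (A *v x)" for A :: mat3
  by (simp add: vec_eq_iff matrix_vector_mult_def sum_negf)

definition cm :: "mat3 \<Rightarrow> mat3 \<Rightarrow> aff \<Rightarrow> aff" where
  "cm Q R g = (Q ** fst g ** R, Q *v snd g)"

lemma bl_cm: "bounded_linear (cm Q R)"
proof -
  have a: "bounded_linear (\<lambda>A :: mat3. Q ** A ** R)"
    using bounded_linear_compose[OF bounded_bilinear.bounded_linear_left[OF bilinear_mm, of R]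
        bounded_bilinear.bounded_linear_right[OF bilinear_mm, of Q]] by simp
  have b: "bounded_linear (\<lambda>x :: vec3. Q *v x)"
    by (rule bounded_bilinear.bounded_linear_right[OF bilinear_mv])
  show ?thesis unfolding cm_def
    by (intro bounded_linear_Pair bounded_linear_compose[OF a bounded_linear_fst]
        bounded_linear_compose[OF b bounded_linear_snd])
qed

lemma minv_unique: "A ** B = mat 1 \<Longrightarrow> B ** A = mat 1 \<Longrightarrow> matrix_inv A = B" for A B :: mat3
proof -
  assume ab: "A ** B = mat 1" "B ** A = mat 1"
  have "A ** matrix_inv A = mat 1 \<and> matrix_inv A ** A = mat 1"
    unfolding matrix_inv_def by (rule someI[of _ B]) (use ab in simp)
  then have "B = B ** (A ** matrix_inv A)" by simp
  also have "\<dots> = matrix_inv A" by (simp add: matrix_mul_assoc ab)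
  finally show ?thesis by simp
qed

lemma SOo12_inv:
  assumes "P \<in> SOo12"
  shows "P ** matrix_inv P = mat 1" "matrix_inv P ** P = mat 1"
proof -
  have "det P = 1" using assms by (simp add: SOo12_def)
  then have "invertible P" by (simp add: invertible_det_nz)
  then obtain B where "P ** B = mat 1" "B ** P = mat 1" unfolding invertible_def by blast
  then have "matrix_inv P = B" by (rule minv_unique)
  then show "P ** matrix_inv P = mat 1" "matrix_inv P ** P = mat 1"
    using \<open>P ** B = mat 1\<close> \<open>B ** P = mat 1\<close> by simp_all
qed

lemma cm_cm:
  assumes "Q ** Q' = mat 1" "R' ** R = mat 1"
  shows "cm Q R (cm Q' R' g) = g"
proof -
  have "Q ** (Q' ** fst g ** R') ** R = (Q ** Q') ** fst g ** (R' ** R)"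
    by (simp add: matrix_mul_assoc)
  moreover have "Q *v (Q' *v snd g) = (Q ** Q') *v snd g" by (simp add: matrix_vector_mul_assoc)
  ultimately show ?thesis using assms by (simp add: cm_def)
qed

lemma Hgrp_conj:
  assumes G: "is_subgroup G" "closed G" "connected G" and P: "P \<in> SOo12"
    and L: "Lpart G = (\<lambda>A. P ** A ** matrix_inv P) ` Agrp"
  shows "Hgrp {g. cm P (matrix_inv P) g \<in> G}"
proof -
  define Pi where "Pi = matrix_inv P"
  have pp: "P ** Pi = mat 1" and ip: "Pi ** P = mat 1" using SOo12_inv[OF P] by (simp_all add: Pi_def)
  define H where "H = {g. cm P Pi g \<in> G}"
  have Gm: "\<And>g h. g \<in> G \<Longrightarrow> h \<in> G \<Longrightarrow> aff_mult g h \<in> G" using G(1) by (simp add: is_subgroup_def)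
  have Gi: "\<And>g. g \<in> G \<Longrightarrow> aff_inv g \<in> G" using G(1) by (simp add: is_subgroup_def)
  have G1: "aff_one \<in> G" using G(1) by (simp add: is_subgroup_def)
  have mult: "cm P Pi (aff_mult g h) = aff_mult (cm P Pi g) (cm P Pi h)" for g h
  proof -
    have "P ** (fst g ** fst h) ** Pi = (P ** fst g ** Pi) ** (P ** fst h ** Pi)"
    proof -
      have "(P ** fst g ** Pi) ** (P ** fst h ** Pi) = P ** fst g ** (Pi ** P) ** fst h ** Pi"
        by (simp add: matrix_mul_assoc)
      then show ?thesis by (simp add: ip matrix_mul_assoc)
    qed
    moreover have "P *v (fst g *v snd h + snd g) = (P ** fst g ** Pi) *v (P *v snd h) + P *v snd g"
    proof -
      have "(P ** fst g ** Pi) *v (P *v snd h) = (P ** fst g ** (Pi ** P)) *v snd h"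
        by (simp add: matrix_vector_mul_assoc matrix_mul_assoc)
      then show ?thesis by (simp add: ip matrix_vector_right_distrib matrix_vector_mul_assoc)
    qed
    ultimately show ?thesis by (simp add: cm_def aff_mult_def)
  qed
  have "Hgrp H"
  proof (unfold_locales)
    fix g h assume "g \<in> H" "h \<in> H"
    then show "aff_mult g h \<in> H" using Gm by (simp add: H_def mult)
  next
    show "aff_one \<in> H" using G1 pp by (simp add: H_def cm_def aff_one_def)
  next
    fix t a assume ta: "(Mt t, a) \<in> H"
    have inv: "matrix_inv (P ** Mt t ** Pi) = P ** Mt (- t) ** Pi"
    proof (rule minv_unique)
      have "(P ** Mt t ** Pi) ** (P ** Mt (- t) ** Pi) = P ** Mt t ** (Pi ** P) ** Mt (- t) ** Pi"
        by (simp add: matrix_mul_assoc)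
      also have "\<dots> = P ** (Mt t ** Mt (- t)) ** Pi" by (simp add: ip matrix_mul_assoc)
      finally show "(P ** Mt t ** Pi) ** (P ** Mt (- t) ** Pi) = mat 1" by (simp add: Mt_neg pp)
      have "(P ** Mt (- t) ** Pi) ** (P ** Mt t ** Pi) = P ** Mt (- t) ** (Pi ** P) ** Mt t ** Pi"
        by (simp add: matrix_mul_assoc)
      also have "\<dots> = P ** (Mt (- t) ** Mt t) ** Pi" by (simp add: ip matrix_mul_assoc)
      finally show "(P ** Mt (- t) ** Pi) ** (P ** Mt t ** Pi) = mat 1" by (simp add: Mt_neg pp)
    qed
    have "aff_inv (cm P Pi (Mt t, a)) \<in> G" using ta Gi by (simp add: H_def)
    moreover have "aff_inv (cm P Pi (Mt t, a)) = cm P Pi (Mt (- t), - (Mt (- t) *v a))"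
    proof -
      have "(P ** Mt (- t) ** Pi) *v (P *v a) = (P ** Mt (- t) ** (Pi ** P)) *v a"
        by (simp add: matrix_vector_mul_assoc matrix_mul_assoc)
      then have "(P ** Mt (- t) ** Pi) *v (P *v a) = P *v (Mt (- t) *v a)"
        by (simp add: ip matrix_vector_mul_assoc)
      then show ?thesis by (simp add: aff_inv_def cm_def inv mv_neg)
    qed
    ultimately show "(Mt (- t), - (Mt (- t) *v a)) \<in> H" by (simp add: H_def)
  next
    fix g assume g: "g \<in> H"
    then have "fst (cm P Pi g) \<in> Lpart G" by (simp add: H_def Lpart_def)
    then obtain A where A: "A \<in> Agrp" "P ** fst g ** Pi = P ** A ** Pi" by (auto simp: L cm_def Pi_def)
    obtain t where "A = Mt t" using A(1) by (auto simp: Agrp_def mexp_B1)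
    have "Pi ** (P ** fst g ** Pi) ** P = Pi ** (P ** A ** Pi) ** P" using A(2) by simp
    then have "(Pi ** P) ** fst g ** (Pi ** P) = (Pi ** P) ** A ** (Pi ** P)" by (simp add: matrix_mul_assoc)
    then have "fst g = A" by (simp add: ip)
    then show "\<exists>t. fst g = Mt t" using \<open>A = Mt t\<close> by blast
  next
    fix t
    have "P ** Mt t ** Pi \<in> Lpart G" unfolding L Agrp_def Pi_def by (auto simp: mexp_B1)
    then obtain g where g: "g \<in> G" "fst g = P ** Mt t ** Pi" by (auto simp: Lpart_def)
    have "cm P Pi (Mt t, Pi *v snd g) = g"
      using g(2) by (simp add: cm_def matrix_vector_mul_assoc pp prod_eq_iff)
    then have "(Mt t, Pi *v snd g) \<in> H" using g(1) by (simp add: H_def)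
    then show "\<exists>a. (Mt t, a) \<in> H" by blast
  next
    have "H = cm P Pi -` G" by (auto simp: H_def)
    moreover have "closed (cm P Pi -` G)"
      by (rule continuous_closed_vimage[OF G(2)]) (rule linear_continuous_at[OF bl_cm])
    ultimately show "closed H" by simp
  next
    have "H = cm Pi P ` G"
    proof
      show "H \<subseteq> cm Pi P ` G"
      proof
        fix g assume "g \<in> H"
        then have "cm P Pi g \<in> G" by (simp add: H_def)
        moreover have "g = cm Pi P (cm P Pi g)" by (rule cm_cm[symmetric]) (simp_all add: ip)
        ultimately show "g \<in> cm Pi P ` G" by blast
      qed
      show "cm Pi P ` G \<subseteq> H"
      proof
        fix g assume "g \<in> cm Pi P ` G"
        then obtain h where "h \<in> G" "g = cm Pi P h" by blast
        moreover have "cm P Pi (cm Pi P h) = h" by (rule cm_cm) (simp_all add: pp)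
        ultimately show "g \<in> H" by (simp add: H_def)
      qed
    qed
    moreover have "connected (cm Pi P ` G)"
      by (rule connected_continuous_image[OF linear_continuous_on[OF bl_cm] G(3)])
    ultimately show "connected H" by simp
  qed
  then show ?thesis by (simp add: H_def Pi_def)
qed

lemma hvd_fst: "(\<gamma> has_vector_derivative \<xi>) F \<Longrightarrow> ((\<lambda>t. fst (\<gamma> t)) has_vector_derivative fst \<xi>) F"
  by (rule bounded_linear.has_vector_derivative[OF bounded_linear_fst])

lemma hvd_snd: "(\<gamma> has_vector_derivative \<xi>) F \<Longrightarrow> ((\<lambda>t. snd (\<gamma> t)) has_vector_derivative snd \<xi>) F"
  by (rule bounded_linear.has_vector_derivative[OF bounded_linear_snd])

lemma hvd_aff_mult:
  assumes "(\<gamma>1 has_vector_derivative \<xi>1) (at 0)" "(\<gamma>2 has_vector_derivative \<xi>2) (at 0)"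
  shows "((\<lambda>t. aff_mult (\<gamma>1 t) (\<gamma>2 t)) has_vector_derivative
     (fst (\<gamma>1 0) ** fst \<xi>2 + fst \<xi>1 ** fst (\<gamma>2 0),
      (fst (\<gamma>1 0) *v snd \<xi>2 + fst \<xi>1 *v snd (\<gamma>2 0)) + snd \<xi>1)) (at 0)"
proof -
  have a: "((\<lambda>t. fst (\<gamma>1 t) ** fst (\<gamma>2 t)) has_vector_derivative (fst (\<gamma>1 0) ** fst \<xi>2 + fst \<xi>1 ** fst (\<gamma>2 0))) (at 0)"
    by (rule bounded_bilinear.has_vector_derivative[OF bilinear_mm hvd_fst[OF assms(1)] hvd_fst[OF assms(2)]])
  have b: "((\<lambda>t. fst (\<gamma>1 t) *v snd (\<gamma>2 t)) has_vector_derivative (fst (\<gamma>1 0) *v snd \<xi>2 + fst \<xi>1 *v snd (\<gamma>2 0))) (at 0)"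
    by (rule bounded_bilinear.has_vector_derivative[OF bilinear_mv hvd_fst[OF assms(1)] hvd_snd[OF assms(2)]])
  have c: "((\<lambda>t. fst (\<gamma>1 t) *v snd (\<gamma>2 t) + snd (\<gamma>1 t)) has_vector_derivative
      (fst (\<gamma>1 0) *v snd \<xi>2 + fst \<xi>1 *v snd (\<gamma>2 0)) + snd \<xi>1) (at 0)"
    by (rule has_vector_derivative_add[OF b hvd_snd[OF assms(1)]])
  show ?thesis unfolding aff_mult_def by (rule has_vector_derivative_Pair[OF a c])
qed

context Hgrp begin

lemma lie_zero: "0 \<in> lie_alg H"
  unfolding lie_alg_def using Hone by (auto intro!: exI[of _ "\<lambda>t. aff_one"])

lemma lie_scale: assumes "\<xi> \<in> lie_alg H" shows "c *\<^sub>R \<xi> \<in> lie_alg H"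
proof -
  obtain \<gamma> where g: "\<forall>t. \<gamma> t \<in> H" "\<gamma> 0 = aff_one" "(\<gamma> has_vector_derivative \<xi>) (at 0)"
    using assms unfolding lie_alg_def by blast
  have f: "((\<lambda>t. c * t) has_vector_derivative c) (at 0)"
    unfolding has_real_derivative_iff_has_vector_derivative[symmetric]
    by (auto intro!: derivative_eq_intros)
  have "((\<gamma> \<circ> (\<lambda>t. c * t)) has_vector_derivative c *\<^sub>R \<xi>) (at 0)"
    by (rule vector_diff_chain_at[OF f]) (simp add: g(3))
  then show ?thesis unfolding lie_alg_def using g(1,2) by (intro CollectI exI[of _ "\<gamma> \<circ> (\<lambda>t. c * t)"]) auto
qed

lemma lie_add: assumes "\<xi>1 \<in> lie_alg H" "\<xi>2 \<in> lie_alg H" shows "\<xi>1 + \<xi>2 \<in> lie_alg H"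
proof -
  obtain \<gamma>1 where g1: "\<forall>t. \<gamma>1 t \<in> H" "\<gamma>1 0 = aff_one" "(\<gamma>1 has_vector_derivative \<xi>1) (at 0)"
    using assms(1) unfolding lie_alg_def by blast
  obtain \<gamma>2 where g2: "\<forall>t. \<gamma>2 t \<in> H" "\<gamma>2 0 = aff_one" "(\<gamma>2 has_vector_derivative \<xi>2) (at 0)"
    using assms(2) unfolding lie_alg_def by blast
  have d: "((\<lambda>t. aff_mult (\<gamma>1 t) (\<gamma>2 t)) has_vector_derivative (fst \<xi>1 + fst \<xi>2, snd \<xi>1 + snd \<xi>2)) (at 0)"
    using hvd_aff_mult[OF g1(3) g2(3)] by (simp add: g1(2) g2(2) aff_one_def add.commute)
  have e: "\<xi>1 + \<xi>2 = (fst \<xi>1 + fst \<xi>2, snd \<xi>1 + snd \<xi>2)" by (simp add: prod_eq_iff)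
  have "((\<lambda>t. aff_mult (\<gamma>1 t) (\<gamma>2 t)) has_vector_derivative \<xi>1 + \<xi>2) (at 0)"
    using d[folded e] .
  moreover have "\<forall>t. aff_mult (\<gamma>1 t) (\<gamma>2 t) \<in> H" using g1(1) g2(1) Hmult by blast
  moreover have "aff_mult (\<gamma>1 0) (\<gamma>2 0) = aff_one" by (simp add: g1(2) g2(2) aff_one_def aff_mult_def)
  ultimately show ?thesis unfolding lie_alg_def mem_Collect_eq
    by (intro exI[of _ "\<lambda>t. aff_mult (\<gamma>1 t) (\<gamma>2 t)"]) blast
qed

lemma lie_diff: "\<xi>1 \<in> lie_alg H \<Longrightarrow> \<xi>2 \<in> lie_alg H \<Longrightarrow> \<xi>1 - \<xi>2 \<in> lie_alg H"
  using lie_add[of \<xi>1 "(-1) *\<^sub>R \<xi>2"] lie_scale[of \<xi>2 "-1"] by simp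

lemma lie_fst: assumes "\<xi> \<in> lie_alg H" shows "fst \<xi> = (fst \<xi> $ 1 $ 2) *\<^sub>R B1"
proof -
  obtain \<gamma> where g: "\<forall>t. \<gamma> t \<in> H" "\<gamma> 0 = aff_one" "(\<gamma> has_vector_derivative \<xi>) (at 0)"
    using assms unfolding lie_alg_def by blast
  define \<tau> where "\<tau> t = (SOME s. fst (\<gamma> t) = Mt s)" for t
  have \<tau>: "fst (\<gamma> t) = Mt (\<tau> t)" for t
    unfolding \<tau>_def using Hfst[OF g(1)[rule_format, of t]] by (rule someI_ex)
  have ent: "((\<lambda>t. fst (\<gamma> t) $ i $ j) has_real_derivative (fst \<xi> $ i $ j)) (at 0)" for i j
  proof -
    have bl: "bounded_linear (\<lambda>g :: aff. fst g $ i $ j)"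
      by (rule bounded_linear_compose[OF bounded_linear_compose[OF bounded_linear_vec_nth[of j] bounded_linear_vec_nth[of i]] bounded_linear_fst])
    show ?thesis unfolding has_real_derivative_iff_has_vector_derivative
      using bounded_linear.has_vector_derivative[OF bl g(3)] by simp
  qed
  have e0: "\<tau> 0 = 0" using \<tau>[of 0] g(2) by (simp add: aff_one_def Mt_eq_1_iff[symmetric])
  have d11: "fst \<xi> $ 1 $ 1 = 0"
  proof (rule DERIV_local_min[OF ent[of 1 1], of 1])
    show "\<forall>y. \<bar>0 - y\<bar> < 1 \<longrightarrow> fst (\<gamma> 0) $ 1 $ 1 \<le> fst (\<gamma> y) $ 1 $ 1"
      using cosh_real_ge_1 by (simp add: \<tau> e0)
  qed simp
  have d22: "fst \<xi> $ 2 $ 2 = 0"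
  proof (rule DERIV_local_min[OF ent[of 2 2], of 1])
    show "\<forall>y. \<bar>0 - y\<bar> < 1 \<longrightarrow> fst (\<gamma> 0) $ 2 $ 2 \<le> fst (\<gamma> y) $ 2 $ 2"
      using cosh_real_ge_1 by (simp add: \<tau> e0)
  qed simp
  have f12: "(\<lambda>t. fst (\<gamma> t) $ 2 $ 1) = (\<lambda>t. fst (\<gamma> t) $ 1 $ 2)" by (simp add: \<tau>)
  have d21: "fst \<xi> $ 2 $ 1 = fst \<xi> $ 1 $ 2"
    using ent[of 2 1] ent[of 1 2] unfolding f12 by (rule DERIV_unique)
  have z: "fst \<xi> $ i $ j = 0" if "(\<lambda>t. fst (\<gamma> t) $ i $ j) = (\<lambda>t. c)" for i j c
    using ent[of i j] unfolding that using DERIV_const DERIV_unique by blast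
  have d13: "fst \<xi> $ 1 $ 3 = 0" by (rule z[of _ _ 0]) (simp add: \<tau>)
  have d23: "fst \<xi> $ 2 $ 3 = 0" by (rule z[of _ _ 0]) (simp add: \<tau>)
  have d31: "fst \<xi> $ 3 $ 1 = 0" by (rule z[of _ _ 0]) (simp add: \<tau>)
  have d32: "fst \<xi> $ 3 $ 2 = 0" by (rule z[of _ _ 0]) (simp add: \<tau>)
  have d33: "fst \<xi> $ 3 $ 3 = 0" by (rule z[of _ _ 1]) (simp add: \<tau>)
  show ?thesis using d11 d22 d21 d13 d23 d31 d32 d33 by (simp add: mat3_eq_iff)
qed

lemma lie_Ad:
  assumes g: "(Mt s, a) \<in> H" and v: "(0, v) \<in> lie_alg H"
  shows "(0, Mt s *v v) \<in> lie_alg H"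
proof -
  obtain \<gamma> where gm: "\<forall>t. \<gamma> t \<in> H" "\<gamma> 0 = aff_one" "(\<gamma> has_vector_derivative (0, v)) (at 0)"
    using v unfolding lie_alg_def by blast
  define b where "b = - (Mt (- s) *v a)"
  have gi: "(Mt (- s), b) \<in> H" unfolding b_def by (rule Hinv[OF g])
  have d1: "((\<lambda>t. aff_mult (Mt s, a) (\<gamma> t)) has_vector_derivative (0, Mt s *v v)) (at 0)"
    using hvd_aff_mult[OF has_vector_derivative_const[of "(Mt s, a)"] gm(3)] by (simp add: gm(2) aff_one_def)
  have d2: "((\<lambda>t. aff_mult (aff_mult (Mt s, a) (\<gamma> t)) (Mt (- s), b)) has_vector_derivative (0, Mt s *v v)) (at 0)"
    using hvd_aff_mult[OF d1 has_vector_derivative_const[of "(Mt (- s), b)"]] by (simp add: gm(2) aff_one_def aff_mult_def)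
  have in1: "\<forall>t. aff_mult (aff_mult (Mt s, a) (\<gamma> t)) (Mt (- s), b) \<in> H"
    using gm(1) g gi Hmult by blast
  have e1: "aff_mult (aff_mult (Mt s, a) (\<gamma> 0)) (Mt (- s), b) = aff_one"
    by (simp add: gm(2) aff_one_def aff_mult_def b_def Mt_neg mv_neg matrix_vector_mul_assoc)
  show ?thesis unfolding lie_alg_def mem_Collect_eq using d2 in1 e1
    by (intro exI[of _ "\<lambda>t. aff_mult (aff_mult (Mt s, a) (\<gamma> t)) (Mt (- s), b)"]) blast
qed

definition V :: "vec3 set" where "V = {v. (0, v) \<in> lie_alg H}"

lemma subspace_V: "subspace V"
  unfolding subspace_def V_def
proof (intro conjI ballI allI CollectI)
  show "(0, 0) \<in> lie_alg H" using lie_zero by (simp add: zero_prod_def)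
next
  fix x y assume "x \<in> {v. (0, v) \<in> lie_alg H}" "y \<in> {v. (0, v) \<in> lie_alg H}"
  then show "(0, x + y) \<in> lie_alg H" using lie_add[of "(0, x)" "(0, y)"] by simp
next
  fix c x assume "x \<in> {v. (0, v) \<in> lie_alg H}"
  then show "(0, c *\<^sub>R x) \<in> lie_alg H" using lie_scale[of "(0, x)" c] by simp
qed

lemma Mt1_diff: "Mt 1 *v v - Mt (- 1) *v v = (2 * sinh 1) *\<^sub>R (B1 *v v)"
  by (simp add: vec3_eq_iff mvec_nth algebra_simps)

lemma V_inv: assumes "v \<in> V" shows "B1 *v v \<in> V"
proof -
  obtain a1 where a1: "(Mt 1, a1) \<in> H" using Hsurj by blast
  obtain a2 where a2: "(Mt (- 1), a2) \<in> H" using Hsurj by blast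
  have v: "(0, v) \<in> lie_alg H" using assms by (simp add: V_def)
  have "(0, Mt 1 *v v) - (0, Mt (- 1) *v v) \<in> lie_alg H"
    by (rule lie_diff[OF lie_Ad[OF a1 v] lie_Ad[OF a2 v]])
  then have "(0, (2 * sinh 1) *\<^sub>R (B1 *v v)) \<in> lie_alg H" by (simp add: Mt1_diff[symmetric])
  from lie_scale[OF this, of "inverse (2 * sinh 1)"] have "(0, B1 *v v) \<in> lie_alg H"
    by simp
  then show ?thesis by (simp add: V_def)
qed

lemma exists_w: "\<exists>w. (B1, w) \<in> lie_alg H"
proof -
  obtain \<xi> where x: "\<xi> \<in> lie_alg H" "fst \<xi> \<noteq> 0" using exists_xi by blast
  define c where "c = fst \<xi> $ 1 $ 2"
  have f: "fst \<xi> = c *\<^sub>R B1" using lie_fst[OF x(1)] by (simp add: c_def)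
  have c0: "c \<noteq> 0" using x(2) f by auto
  have "inverse c *\<^sub>R \<xi> \<in> lie_alg H" by (rule lie_scale[OF x(1)])
  moreover have "fst (inverse c *\<^sub>R \<xi>) = B1" using f c0 by simp
  ultimately show ?thesis by (metis prod.collapse)
qed

lemma lie_struct:
  assumes w: "(B1, w) \<in> lie_alg H"
  shows "lie_alg H = {(t *\<^sub>R B1, t *\<^sub>R w + u) | t u. u \<in> V}"
proof
  show "lie_alg H \<subseteq> {(t *\<^sub>R B1, t *\<^sub>R w + u) | t u. u \<in> V}"
  proof
    fix \<xi> assume x: "\<xi> \<in> lie_alg H"
    define c where "c = fst \<xi> $ 1 $ 2"
    have f: "fst \<xi> = c *\<^sub>R B1" using lie_fst[OF x] by (simp add: c_def)
    have "\<xi> - c *\<^sub>R (B1, w) \<in> lie_alg H" by (rule lie_diff[OF x lie_scale[OF w]])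
    moreover have "\<xi> - c *\<^sub>R (B1, w) = (0, snd \<xi> - c *\<^sub>R w)" using f by (cases \<xi>) simp
    ultimately have "snd \<xi> - c *\<^sub>R w \<in> V" by (simp add: V_def)
    moreover have "\<xi> = (c *\<^sub>R B1, c *\<^sub>R w + (snd \<xi> - c *\<^sub>R w))" using f by (cases \<xi>) simp
    ultimately show "\<xi> \<in> {(t *\<^sub>R B1, t *\<^sub>R w + u) | t u. u \<in> V}" by blast
  qed
  show "{(t *\<^sub>R B1, t *\<^sub>R w + u) | t u. u \<in> V} \<subseteq> lie_alg H"
  proof
    fix \<xi> assume "\<xi> \<in> {(t *\<^sub>R B1, t *\<^sub>R w + u) | t u. u \<in> V}"
    then obtain t u where tu: "\<xi> = (t *\<^sub>R B1, t *\<^sub>R w + u)" "u \<in> V" by blast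
    have u: "(0, u) \<in> lie_alg H" using tu(2) by (simp add: V_def)
    have "t *\<^sub>R (B1, w) + (0, u) \<in> lie_alg H"
      by (rule lie_add[OF lie_scale[OF w] u])
    then show "\<xi> \<in> lie_alg H" using tu(1) by simp
  qed
qed

end

lemma lie_conj:
  assumes pp: "P ** Pv = mat 1" and ip: "Pv ** P = mat 1"
  shows "lie_alg G = cm P Pv ` lie_alg {g. cm P Pv g \<in> G}"
proof
  have one1: "cm P Pv aff_one = aff_one" using pp by (simp add: cm_def aff_one_def)
  have one2: "cm Pv P aff_one = aff_one" using ip by (simp add: cm_def aff_one_def)
  show "lie_alg G \<subseteq> cm P Pv ` lie_alg {g. cm P Pv g \<in> G}"
  proof
    fix \<xi> assume "\<xi> \<in> lie_alg G"
    then obtain \<gamma> where g: "\<forall>t. \<gamma> t \<in> G" "\<gamma> 0 = aff_one" "(\<gamma> has_vector_derivative \<xi>) (at 0)"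
      unfolding lie_alg_def by blast
    have "((\<lambda>t. cm Pv P (\<gamma> t)) has_vector_derivative cm Pv P \<xi>) (at 0)"
      by (rule bounded_linear.has_vector_derivative[OF bl_cm g(3)])
    moreover have "\<forall>t. cm P Pv (cm Pv P (\<gamma> t)) \<in> G" using g(1) cm_cm[OF pp pp] by simp
    moreover have "cm Pv P (\<gamma> 0) = aff_one" using g(2) one2 by simp
    ultimately have "cm Pv P \<xi> \<in> lie_alg {g. cm P Pv g \<in> G}" unfolding lie_alg_def mem_Collect_eq
      by (intro exI[of _ "\<lambda>t. cm Pv P (\<gamma> t)"]) blast
    moreover have "\<xi> = cm P Pv (cm Pv P \<xi>)" using cm_cm[OF pp pp] by simp
    ultimately show "\<xi> \<in> cm P Pv ` lie_alg {g. cm P Pv g \<in> G}" by blast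
  qed
  show "cm P Pv ` lie_alg {g. cm P Pv g \<in> G} \<subseteq> lie_alg G"
  proof
    fix \<xi> assume "\<xi> \<in> cm P Pv ` lie_alg {g. cm P Pv g \<in> G}"
    then obtain \<eta> where e: "\<xi> = cm P Pv \<eta>" "\<eta> \<in> lie_alg {g. cm P Pv g \<in> G}" by blast
    then obtain \<gamma> where g: "\<forall>t. cm P Pv (\<gamma> t) \<in> G" "\<gamma> 0 = aff_one" "(\<gamma> has_vector_derivative \<eta>) (at 0)"
      unfolding lie_alg_def by blast
    have "((\<lambda>t. cm P Pv (\<gamma> t)) has_vector_derivative cm P Pv \<eta>) (at 0)"
      by (rule bounded_linear.has_vector_derivative[OF bl_cm g(3)])
    moreover have "cm P Pv (\<gamma> 0) = aff_one" using g(2) one1 by simp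
    ultimately show "\<xi> \<in> lie_alg G" unfolding lie_alg_def mem_Collect_eq e(1) using g(1)
      by (intro exI[of _ "\<lambda>t. cm P Pv (\<gamma> t)"]) blast
  qed
qed

lemma orbit_conj:
  assumes pp: "P ** Pv = mat 1" and ip: "Pv ** P = mat 1"
  shows "orbit_tangent G x = (\<lambda>y. P *v y) ` orbit_tangent {g. cm P Pv g \<in> G} (Pv *v x)"
proof -
  have e: "fst (cm P Pv \<eta>) *v x + snd (cm P Pv \<eta>) = P *v (fst \<eta> *v (Pv *v x) + snd \<eta>)" for \<eta>
  proof -
    have "(P ** fst \<eta> ** Pv) *v x = P *v (fst \<eta> *v (Pv *v x))" by (simp add: matrix_vector_mul_assoc matrix_mul_assoc)
    then show ?thesis by (simp add: cm_def matrix_vector_right_distrib)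
  qed
  define L where "L = lie_alg {g. cm P Pv g \<in> G}"
  show ?thesis unfolding orbit_tangent_def lie_conj[OF pp ip, of G] L_def[symmetric]
  proof (intro set_eqI iffI)
    fix z assume "z \<in> {fst \<xi> *v x + snd \<xi> |\<xi>. \<xi> \<in> cm P Pv ` L}"
    then obtain \<eta> where "\<eta> \<in> L" "z = fst (cm P Pv \<eta>) *v x + snd (cm P Pv \<eta>)" by blast
    then show "z \<in> (*v) P ` {fst \<xi> *v (Pv *v x) + snd \<xi> |\<xi>. \<xi> \<in> L}" using e by blast
  next
    fix z assume "z \<in> (*v) P ` {fst \<xi> *v (Pv *v x) + snd \<xi> |\<xi>. \<xi> \<in> L}"
    then obtain \<eta> where h: "\<eta> \<in> L" "z = P *v (fst \<eta> *v (Pv *v x) + snd \<eta>)" by blast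
    show "z \<in> {fst \<xi> *v x + snd \<xi> |\<xi>. \<xi> \<in> cm P Pv ` L}"
      by (intro CollectI exI[of _ "cm P Pv \<eta>"]) (use h e[of \<eta>] in auto)
  qed
qed

definition mk3 :: "real \<Rightarrow> real \<Rightarrow> real \<Rightarrow> vec3" where
  "mk3 a b c = (\<chi> i. if i = 1 then a else if i = 2 then b else c)"

lemma mk3_nth[simp]: "mk3 a b c $ 1 = a" "mk3 a b c $ 2 = b" "mk3 a b c $ 3 = c"
  by (simp_all add: mk3_def)

lemma e_nth[simp]: "e 1 $ 1 = 1" "e 1 $ 2 = 0" "e 1 $ 3 = 0" "e 2 $ 1 = 0" "e 2 $ 2 = 1" "e 2 $ 3 = 0"
  "e 3 $ 1 = 0" "e 3 $ 2 = 0" "e 3 $ 3 = 1"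
  by (simp_all add: e_def axis_def)

lemma B1v_nth[simp]: "(B1 *v x) $ 1 = x $ 2" "(B1 *v x) $ 2 = x $ 1" "(B1 *v x) $ 3 = 0"
  by (simp_all add: mvec_nth)

definition Vs :: "bool \<Rightarrow> bool \<Rightarrow> bool \<Rightarrow> vec3 set" where
  "Vs a b c = {x. (\<not> a \<longrightarrow> x $ 1 + x $ 2 = 0) \<and> (\<not> b \<longrightarrow> x $ 1 = x $ 2) \<and> (\<not> c \<longrightarrow> x $ 3 = 0)}"

lemma inv_subspace_class:
  assumes S: "subspace V" and inv: "\<And>v. v \<in> V \<Longrightarrow> B1 *v v \<in> V"
  shows "V = Vs (mk3 1 1 0 \<in> V) (mk3 1 (-1) 0 \<in> V) (mk3 0 0 1 \<in> V)"
proof -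
  have sc: "c *\<^sub>R x \<in> V" if "x \<in> V" for c x using S that by (simp add: subspace_def)
  have ad: "x + y \<in> V" if "x \<in> V" "y \<in> V" for x y using S that by (simp add: subspace_def)
  have z: "0 \<in> V" using S by (simp add: subspace_def)
  have parts: "mk3 0 0 (u $ 3) \<in> V \<and> ((u $ 1 + u $ 2) / 2) *\<^sub>R mk3 1 1 0 \<in> V \<and> ((u $ 1 - u $ 2) / 2) *\<^sub>R mk3 1 (-1) 0 \<in> V"
    if u: "u \<in> V" for u
  proof -
    have b1: "B1 *v u \<in> V" by (rule inv[OF u])
    have b2: "B1 *v (B1 *v u) \<in> V" by (rule inv[OF b1])
    have "u + (-1) *\<^sub>R (B1 *v (B1 *v u)) \<in> V" by (intro ad u sc b2)
    moreover have "u + (-1) *\<^sub>R (B1 *v (B1 *v u)) = mk3 0 0 (u $ 3)" by (simp add: vec3_eq_iff)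
    moreover have "(1/2) *\<^sub>R (B1 *v (B1 *v u) + B1 *v u) \<in> V" by (intro sc ad b1 b2)
    moreover have "(1/2) *\<^sub>R (B1 *v (B1 *v u) + B1 *v u) = ((u $ 1 + u $ 2) / 2) *\<^sub>R mk3 1 1 0"
      by (simp add: vec3_eq_iff algebra_simps)
    moreover have "(1/2) *\<^sub>R (B1 *v (B1 *v u) + (-1) *\<^sub>R (B1 *v u)) \<in> V" by (intro sc ad b1 b2)
    moreover have "(1/2) *\<^sub>R (B1 *v (B1 *v u) + (-1) *\<^sub>R (B1 *v u)) = ((u $ 1 - u $ 2) / 2) *\<^sub>R mk3 1 (-1) 0"
      by (simp add: vec3_eq_iff algebra_simps)
    ultimately show ?thesis by simp
  qed
  show ?thesis
  proof
    show "V \<subseteq> Vs (mk3 1 1 0 \<in> V) (mk3 1 (-1) 0 \<in> V) (mk3 0 0 1 \<in> V)"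
    proof
      fix u assume u: "u \<in> V"
      from parts[OF u] have p1: "mk3 0 0 (u $ 3) \<in> V" and p2: "((u $ 1 + u $ 2) / 2) *\<^sub>R mk3 1 1 0 \<in> V"
        and p3: "((u $ 1 - u $ 2) / 2) *\<^sub>R mk3 1 (-1) 0 \<in> V" by auto
      have iv: "inverse c *\<^sub>R (c *\<^sub>R m) = m" if "c \<noteq> 0" for c :: real and m :: vec3 using that by simp
      have c1: "mk3 1 1 0 \<in> V" if "u $ 1 + u $ 2 \<noteq> 0"
      proof -
        have "inverse ((u $ 1 + u $ 2) / 2) *\<^sub>R (((u $ 1 + u $ 2) / 2) *\<^sub>R mk3 1 1 0) \<in> V" by (rule sc[OF p2])
        then show ?thesis using that iv[of "(u $ 1 + u $ 2) / 2" "mk3 1 1 0"] by simp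
      qed
      have c2: "mk3 1 (-1) 0 \<in> V" if "u $ 1 \<noteq> u $ 2"
      proof -
        have "inverse ((u $ 1 - u $ 2) / 2) *\<^sub>R (((u $ 1 - u $ 2) / 2) *\<^sub>R mk3 1 (-1) 0) \<in> V" by (rule sc[OF p3])
        then show ?thesis using that iv[of "(u $ 1 - u $ 2) / 2" "mk3 1 (-1) 0"] by simp
      qed
      have c3: "mk3 0 0 1 \<in> V" if "u $ 3 \<noteq> 0"
      proof -
        have "inverse (u $ 3) *\<^sub>R mk3 0 0 (u $ 3) \<in> V" by (rule sc[OF p1])
        moreover have "inverse (u $ 3) *\<^sub>R mk3 0 0 (u $ 3) = mk3 0 0 1" using that by (simp add: vec3_eq_iff)
        ultimately show ?thesis by simp
      qed
      show "u \<in> Vs (mk3 1 1 0 \<in> V) (mk3 1 (-1) 0 \<in> V) (mk3 0 0 1 \<in> V)"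
        unfolding Vs_def using c1 c2 c3 by auto
    qed
    show "Vs (mk3 1 1 0 \<in> V) (mk3 1 (-1) 0 \<in> V) (mk3 0 0 1 \<in> V) \<subseteq> V"
    proof
      fix x assume x: "x \<in> Vs (mk3 1 1 0 \<in> V) (mk3 1 (-1) 0 \<in> V) (mk3 0 0 1 \<in> V)"
      have t1: "((x $ 1 + x $ 2) / 2) *\<^sub>R mk3 1 1 0 \<in> V"
        using x z sc[of "mk3 1 1 0"] by (cases "mk3 1 1 0 \<in> V") (auto simp: Vs_def)
      have t2: "((x $ 1 - x $ 2) / 2) *\<^sub>R mk3 1 (-1) 0 \<in> V"
        using x z sc[of "mk3 1 (-1) 0"] by (cases "mk3 1 (-1) 0 \<in> V") (auto simp: Vs_def)
      have t3: "(x $ 3) *\<^sub>R mk3 0 0 1 \<in> V"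
        using x z sc[of "mk3 0 0 1"] by (cases "mk3 0 0 1 \<in> V") (auto simp: Vs_def)
      have "((x $ 1 + x $ 2) / 2) *\<^sub>R mk3 1 1 0 + ((x $ 1 - x $ 2) / 2) *\<^sub>R mk3 1 (-1) 0 + (x $ 3) *\<^sub>R mk3 0 0 1 \<in> V"
        by (intro ad t1 t2 t3)
      moreover have "((x $ 1 + x $ 2) / 2) *\<^sub>R mk3 1 1 0 + ((x $ 1 - x $ 2) / 2) *\<^sub>R mk3 1 (-1) 0 + (x $ 3) *\<^sub>R mk3 0 0 1 = x"
        by (simp add: vec3_eq_iff field_simps)
      ultimately show "x \<in> V" by simp
    qed
  qed
qed

lemma scaleR_mv: "(c *\<^sub>R A) *v x = c *\<^sub>R (A *v x)" for A :: mat3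
  by (simp add: vec_eq_iff matrix_vector_mult_def sum_distrib_left mult.assoc)

context Hgrp begin

lemma orbitH:
  assumes w: "(B1, w) \<in> lie_alg H"
  shows "orbit_tangent H y = {t *\<^sub>R (B1 *v y + w) + u | t u. u \<in> V}"
proof -
  have e: "(t *\<^sub>R B1) *v y + (t *\<^sub>R w + u) = t *\<^sub>R (B1 *v y + w) + u" for t u
    by (simp add: scaleR_mv algebra_simps)
  show ?thesis unfolding orbit_tangent_def lie_struct[OF w]
  proof (intro set_eqI iffI)
    fix z assume "z \<in> {fst \<xi> *v y + snd \<xi> |\<xi>. \<xi> \<in> {(t *\<^sub>R B1, t *\<^sub>R w + u) |t u. u \<in> V}}"
    then obtain t u where "u \<in> V" "z = (t *\<^sub>R B1) *v y + (t *\<^sub>R w + u)" by auto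
    then show "z \<in> {t *\<^sub>R (B1 *v y + w) + u | t u. u \<in> V}" using e by blast
  next
    fix z assume "z \<in> {t *\<^sub>R (B1 *v y + w) + u | t u. u \<in> V}"
    then obtain t u where tu: "u \<in> V" "z = t *\<^sub>R (B1 *v y + w) + u" by auto
    show "z \<in> {fst \<xi> *v y + snd \<xi> |\<xi>. \<xi> \<in> {(t *\<^sub>R B1, t *\<^sub>R w + u) |t u. u \<in> V}}"
      by (intro CollectI exI[of _ "(t *\<^sub>R B1, t *\<^sub>R w + u)"]) (use tu e in auto)
  qed
qed

lemma dim_constraints:
  assumes w: "(B1, w) \<in> lie_alg H" and d: "dim (orbit_tangent H y) = 2"
  shows "V \<noteq> {0}" "V \<noteq> UNIV" "V = {x. x $ 3 = 0} \<Longrightarrow> w $ 3 = 0"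
proof -
  define q where "q = B1 *v y + w"
  have O: "orbit_tangent H y = {t *\<^sub>R q + u | t u. u \<in> V}" unfolding q_def by (rule orbitH[OF w])
  show "V \<noteq> {0}"
  proof
    assume V0: "V = {0}"
    have "orbit_tangent H y \<subseteq> span {q}"
    proof
      fix z assume "z \<in> orbit_tangent H y"
      then obtain t where "z = t *\<^sub>R q" unfolding O V0 by auto
      then show "z \<in> span {q}" by (simp add: span_scale span_base)
    qed
    then have "dim (orbit_tangent H y) \<le> card {q}" by (rule dim_le_card) simp
    then show False using d by simp
  qed
  show "V \<noteq> UNIV"
  proof
    assume V1: "V = UNIV"
    have "z \<in> {t *\<^sub>R q + u | t u. u \<in> V}" for z
    proof -
      have "z = 0 *\<^sub>R q + z \<and> z \<in> V" using V1 by simp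
      then show ?thesis by blast
    qed
    then have "orbit_tangent H y = UNIV" unfolding O by blast
    then show False using d by simp
  qed
  show "w $ 3 = 0" if V2: "V = {x. x $ 3 = 0}"
  proof (rule ccontr)
    assume w3: "w $ 3 \<noteq> 0"
    have q3: "q $ 3 = w $ 3" by (simp add: q_def)
    have "orbit_tangent H y = UNIV"
    proof -
      have "z \<in> {t *\<^sub>R q + u | t u. u \<in> V}" for z
      proof -
        define t where "t = z $ 3 / q $ 3"
        have "z - t *\<^sub>R q \<in> V" using w3 q3 by (simp add: V2 t_def)
        moreover have "z = t *\<^sub>R q + (z - t *\<^sub>R q)" by simp
        ultimately show ?thesis by blast
      qed
      then show ?thesis unfolding O by blast
    qed
    then show False using d by simp
  qed
qed

end

lemma conj_alg_lemma:
  assumes P: "P \<in> SOo12"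
    and L: "lie_alg G = cm P (matrix_inv P) ` {(t *\<^sub>R B1, t *\<^sub>R w + u) | t u. u \<in> V}"
    and S: "subspace V" and d: "w0 - B1 *v r - w \<in> V"
  shows "conj_alg (lie_alg G) {(t *\<^sub>R B1, t *\<^sub>R w0 + u) | t u. u \<in> V}"
proof -
  define Pv where "Pv = matrix_inv P"
  have ip: "Pv ** P = mat 1" using SOo12_inv[OF P] by (simp add: Pv_def)
  define dd where "dd = w0 - B1 *v r - w"
  have key: "(P ** X ** Pv) *v (P *v r) = P *v (X *v r)" for X
  proof -
    have "(P ** X ** Pv) *v (P *v r) = (P ** X ** (Pv ** P)) *v r" by (simp add: matrix_vector_mul_assoc matrix_mul_assoc)
    then show ?thesis by (simp add: ip matrix_vector_mul_assoc)
  qed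
  have Adeq: "Ad (P, P *v r) (t *\<^sub>R B1, t *\<^sub>R w0 + u) = cm P Pv (t *\<^sub>R B1, t *\<^sub>R w + (u + t *\<^sub>R dd))" for t u
    by (simp add: Ad_def cm_def Let_def key Pv_def[symmetric] dd_def algebra_simps scaleR_mv)
  have sc: "c *\<^sub>R x \<in> V" if "x \<in> V" for c x using S that by (simp add: subspace_def)
  have ad: "x + y \<in> V" if "x \<in> V" "y \<in> V" for x y using S that by (simp add: subspace_def)
  have ddV: "dd \<in> V" using d by (simp add: dd_def)
  have "lie_alg G = Ad (P, P *v r) ` {(t *\<^sub>R B1, t *\<^sub>R w0 + u) | t u. u \<in> V}"
  proof (intro set_eqI iffI)
    fix \<xi> assume "\<xi> \<in> lie_alg G"
    then obtain t u where tu: "u \<in> V" "\<xi> = cm P Pv (t *\<^sub>R B1, t *\<^sub>R w + u)" unfolding L Pv_def by blast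
    have u': "u + (- t) *\<^sub>R dd \<in> V" by (intro ad tu(1) sc ddV)
    have "\<xi> = Ad (P, P *v r) (t *\<^sub>R B1, t *\<^sub>R w0 + (u + (- t) *\<^sub>R dd))"
      unfolding Adeq tu(2) by simp
    then show "\<xi> \<in> Ad (P, P *v r) ` {(t *\<^sub>R B1, t *\<^sub>R w0 + u) | t u. u \<in> V}" using u' by blast
  next
    fix \<xi> assume "\<xi> \<in> Ad (P, P *v r) ` {(t *\<^sub>R B1, t *\<^sub>R w0 + u) | t u. u \<in> V}"
    then obtain t u where tu: "u \<in> V" "\<xi> = Ad (P, P *v r) (t *\<^sub>R B1, t *\<^sub>R w0 + u)" by blast
    have u': "u + t *\<^sub>R dd \<in> V" by (intro ad tu(1) sc ddV)
    show "\<xi> \<in> lie_alg G" unfolding L tu(2) Adeq Pv_def using u' by blast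
  qed
  moreover have "(P, P *v r) \<in> SOo12R3" using P by (simp add: SOo12R3_def)
  ultimately show ?thesis unfolding conj_alg_def by blast
qed

lemma alg_i_eq: "alg_i = {(t *\<^sub>R B1, t *\<^sub>R 0 + u) | t u. u \<in> Vs False False True}"
proof (intro set_eqI iffI)
  fix \<xi> assume "\<xi> \<in> alg_i"
  then obtain t s where "\<xi> = (t *\<^sub>R B1, s *\<^sub>R e 3)" by (auto simp: alg_i_def)
  then show "\<xi> \<in> {(t *\<^sub>R B1, t *\<^sub>R 0 + u) | t u. u \<in> Vs False False True}"
    by (intro CollectI exI[of _ t] exI[of _ "s *\<^sub>R e 3"]) (simp add: Vs_def)
next
  fix \<xi> assume "\<xi> \<in> {(t *\<^sub>R B1, t *\<^sub>R 0 + u) | t u. u \<in> Vs False False True}"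
  then obtain t u where tu: "\<xi> = (t *\<^sub>R B1, t *\<^sub>R 0 + u)" "u \<in> Vs False False True" by blast
  then show "\<xi> \<in> alg_i" unfolding alg_i_def
    by (intro CollectI exI[of _ t] exI[of _ "u $ 3"]) (auto simp: Vs_def vec3_eq_iff)
qed

lemma alg_ii_eq: "alg_ii = {(t *\<^sub>R B1, t *\<^sub>R 0 + u) | t u. u \<in> Vs True True False}"
proof (intro set_eqI iffI)
  fix \<xi> assume "\<xi> \<in> alg_ii"
  then obtain t u v where "\<xi> = (t *\<^sub>R B1, u *\<^sub>R e 1 + v *\<^sub>R e 2)" by (auto simp: alg_ii_def)
  then show "\<xi> \<in> {(t *\<^sub>R B1, t *\<^sub>R 0 + u) | t u. u \<in> Vs True True False}"
    by (intro CollectI exI[of _ t] exI[of _ "u *\<^sub>R e 1 + v *\<^sub>R e 2"]) (simp add: Vs_def)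
next
  fix \<xi> assume "\<xi> \<in> {(t *\<^sub>R B1, t *\<^sub>R 0 + u) | t u. u \<in> Vs True True False}"
  then obtain t u where tu: "\<xi> = (t *\<^sub>R B1, t *\<^sub>R 0 + u)" "u \<in> Vs True True False" by blast
  then show "\<xi> \<in> alg_ii" unfolding alg_ii_def
    by (intro CollectI exI[of _ t] exI[of _ "u $ 1"] exI[of _ "u $ 2"]) (auto simp: Vs_def vec3_eq_iff)
qed

lemma alg_iii_eq: "alg_iii = {(t *\<^sub>R B1, t *\<^sub>R 0 + u) | t u. u \<in> Vs True False True}"
proof (intro set_eqI iffI)
  fix \<xi> assume "\<xi> \<in> alg_iii"
  then obtain t u v where "\<xi> = (t *\<^sub>R B1, u *\<^sub>R (e 1 + e 2) + v *\<^sub>R e 3)" by (auto simp: alg_iii_def)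
  then show "\<xi> \<in> {(t *\<^sub>R B1, t *\<^sub>R 0 + u) | t u. u \<in> Vs True False True}"
    by (intro CollectI exI[of _ t] exI[of _ "u *\<^sub>R (e 1 + e 2) + v *\<^sub>R e 3"]) (simp add: Vs_def)
next
  fix \<xi> assume "\<xi> \<in> {(t *\<^sub>R B1, t *\<^sub>R 0 + u) | t u. u \<in> Vs True False True}"
  then obtain t u where tu: "\<xi> = (t *\<^sub>R B1, t *\<^sub>R 0 + u)" "u \<in> Vs True False True" by blast
  then show "\<xi> \<in> alg_iii" unfolding alg_iii_def
    by (intro CollectI exI[of _ t] exI[of _ "u $ 1"] exI[of _ "u $ 3"]) (auto simp: Vs_def vec3_eq_iff)
qed

lemma alg_iv_eq: "alg_iv = {(t *\<^sub>R B1, t *\<^sub>R 0 + u) | t u. u \<in> Vs False True True}"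
proof (intro set_eqI iffI)
  fix \<xi> assume "\<xi> \<in> alg_iv"
  then obtain t u v where "\<xi> = (t *\<^sub>R B1, u *\<^sub>R (e 1 - e 2) + v *\<^sub>R e 3)" by (auto simp: alg_iv_def)
  then show "\<xi> \<in> {(t *\<^sub>R B1, t *\<^sub>R 0 + u) | t u. u \<in> Vs False True True}"
    by (intro CollectI exI[of _ t] exI[of _ "u *\<^sub>R (e 1 - e 2) + v *\<^sub>R e 3"]) (simp add: Vs_def)
next
  fix \<xi> assume "\<xi> \<in> {(t *\<^sub>R B1, t *\<^sub>R 0 + u) | t u. u \<in> Vs False True True}"
  then obtain t u where tu: "\<xi> = (t *\<^sub>R B1, t *\<^sub>R 0 + u)" "u \<in> Vs False True True" by blast
  then show "\<xi> \<in> alg_iv" unfolding alg_iv_def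
    by (intro CollectI exI[of _ t] exI[of _ "u $ 1"] exI[of _ "u $ 3"]) (auto simp: Vs_def vec3_eq_iff)
qed

lemma alg_vp_eq: "alg_v_plus \<beta> = {(t *\<^sub>R B1, t *\<^sub>R (\<beta> *\<^sub>R e 3) + u) | t u. u \<in> Vs True False False}"
proof (intro set_eqI iffI)
  fix \<xi> assume "\<xi> \<in> alg_v_plus \<beta>"
  then obtain t s where "\<xi> = (t *\<^sub>R B1, s *\<^sub>R (e 1 + e 2) + (t * \<beta>) *\<^sub>R e 3)" by (auto simp: alg_v_plus_def)
  then show "\<xi> \<in> {(t *\<^sub>R B1, t *\<^sub>R (\<beta> *\<^sub>R e 3) + u) | t u. u \<in> Vs True False False}"
    by (intro CollectI exI[of _ t] exI[of _ "s *\<^sub>R (e 1 + e 2)"]) (simp add: Vs_def vec3_eq_iff)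
next
  fix \<xi> assume "\<xi> \<in> {(t *\<^sub>R B1, t *\<^sub>R (\<beta> *\<^sub>R e 3) + u) | t u. u \<in> Vs True False False}"
  then obtain t u where tu: "\<xi> = (t *\<^sub>R B1, t *\<^sub>R (\<beta> *\<^sub>R e 3) + u)" "u \<in> Vs True False False" by blast
  then show "\<xi> \<in> alg_v_plus \<beta>" unfolding alg_v_plus_def
    by (intro CollectI exI[of _ t] exI[of _ "u $ 1"]) (auto simp: Vs_def vec3_eq_iff)
qed

lemma alg_vm_eq: "alg_v_minus \<beta> = {(t *\<^sub>R B1, t *\<^sub>R (\<beta> *\<^sub>R e 3) + u) | t u. u \<in> Vs False True False}"
proof (intro set_eqI iffI)
  fix \<xi> assume "\<xi> \<in> alg_v_minus \<beta>"
  then obtain t s where "\<xi> = (t *\<^sub>R B1, s *\<^sub>R (e 1 - e 2) + (t * \<beta>) *\<^sub>R e 3)" by (auto simp: alg_v_minus_def)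
  then show "\<xi> \<in> {(t *\<^sub>R B1, t *\<^sub>R (\<beta> *\<^sub>R e 3) + u) | t u. u \<in> Vs False True False}"
    by (intro CollectI exI[of _ t] exI[of _ "s *\<^sub>R (e 1 - e 2)"]) (simp add: Vs_def vec3_eq_iff)
next
  fix \<xi> assume "\<xi> \<in> {(t *\<^sub>R B1, t *\<^sub>R (\<beta> *\<^sub>R e 3) + u) | t u. u \<in> Vs False True False}"
  then obtain t u where tu: "\<xi> = (t *\<^sub>R B1, t *\<^sub>R (\<beta> *\<^sub>R e 3) + u)" "u \<in> Vs False True False" by blast
  then show "\<xi> \<in> alg_v_minus \<beta>" unfolding alg_v_minus_def
    by (intro CollectI exI[of _ t] exI[of _ "u $ 1"]) (auto simp: Vs_def vec3_eq_iff)
qed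

lemma final_cases:
  assumes P: "P \<in> SOo12"
    and LG: "lie_alg G = cm P (matrix_inv P) ` {(t *\<^sub>R B1, t *\<^sub>R w + u) | t u. u \<in> Vs a b c}"
    and S: "subspace (Vs a b c)" and n0: "Vs a b c \<noteq> {0}" and n1: "Vs a b c \<noteq> UNIV"
    and w3: "Vs a b c = {x. x $ 3 = 0} \<Longrightarrow> w $ 3 = 0"
  shows "conj_alg (lie_alg G) alg_i \<or> conj_alg (lie_alg G) alg_ii \<or>
         conj_alg (lie_alg G) alg_iii \<or> conj_alg (lie_alg G) alg_iv \<or>
         (\<exists>\<beta>::real. conj_alg (lie_alg G) (alg_v_plus \<beta>) \<or> conj_alg (lie_alg G) (alg_v_minus \<beta>))"
proof -
  define r where "r = mk3 (- (w $ 2)) (- (w $ 1)) 0"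
  have Br: "B1 *v r = mk3 (- (w $ 1)) (- (w $ 2)) 0" by (simp add: vec3_eq_iff r_def)
  have c0: "conj_alg (lie_alg G) {(t *\<^sub>R B1, t *\<^sub>R 0 + u) | t u. u \<in> Vs a b c}" if "w $ 3 = 0 \<or> c"
    by (rule conj_alg_lemma[OF P LG S, where r = r]) (use that in \<open>auto simp: Vs_def Br\<close>)
  have c1: "conj_alg (lie_alg G) {(t *\<^sub>R B1, t *\<^sub>R ((w $ 3) *\<^sub>R e 3) + u) | t u. u \<in> Vs a b c}"
    by (rule conj_alg_lemma[OF P LG S, where r = r]) (auto simp: Vs_def Br)
  have FFF: "Vs False False False = {0}" by (auto simp: Vs_def vec3_eq_iff)
  have TTT: "Vs True True True = UNIV" by (auto simp: Vs_def)
  have TTF: "Vs True True False = {x. x $ 3 = 0}" by (auto simp: Vs_def)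
  show ?thesis
  proof (cases a; cases b; cases c)
    assume "a" "b" "c" then show ?thesis using n1 TTT by simp
  next
    assume "a" "b" "\<not> c" then show ?thesis using c0 w3 TTF by (simp add: alg_ii_eq)
  next
    assume "a" "\<not> b" "c" then show ?thesis using c0 by (simp add: alg_iii_eq)
  next
    assume "a" "\<not> b" "\<not> c" then show ?thesis using c1 by (auto simp: alg_vp_eq)
  next
    assume "\<not> a" "b" "c" then show ?thesis using c0 by (simp add: alg_iv_eq)
  next
    assume "\<not> a" "b" "\<not> c" then show ?thesis using c1 by (auto simp: alg_vm_eq)
  next
    assume "\<not> a" "\<not> b" "c" then show ?thesis using c0 by (simp add: alg_i_eq)
  next
    assume "\<not> a" "\<not> b" "\<not> c" then show ?thesis using n0 FFF by simp
  qed
qed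

theorem lemma3p2:
  fixes G :: "aff set"
  assumes "is_subgroup G" and "closed G" and "connected G"
    and "cohomogeneity_one G"
    and "\<exists>P\<in>SOo12. Lpart G = (\<lambda>A. P ** A ** matrix_inv P) ` Agrp"
  shows "conj_alg (lie_alg G) alg_i \<or> conj_alg (lie_alg G) alg_ii \<or>
         conj_alg (lie_alg G) alg_iii \<or> conj_alg (lie_alg G) alg_iv \<or>
         (\<exists>\<beta>::real. conj_alg (lie_alg G) (alg_v_plus \<beta>) \<or> conj_alg (lie_alg G) (alg_v_minus \<beta>))"
proof -
  obtain P where P: "P \<in> SOo12" and L: "Lpart G = (\<lambda>A. P ** A ** matrix_inv P) ` Agrp"
    using assms(5) by blast
  define Pv where "Pv = matrix_inv P"
  have pp: "P ** Pv = mat 1" and ip: "Pv ** P = mat 1" using SOo12_inv[OF P] by (simp_all add: Pv_def)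
  define H where "H = {g. cm P Pv g \<in> G}"
  have HG: "Hgrp H" unfolding H_def Pv_def by (rule Hgrp_conj[OF assms(1-3) P L])
  interpret Hgrp H by (rule HG)
  obtain w where w: "(B1, w) \<in> lie_alg H" using exists_w by blast
  have LG: "lie_alg G = cm P Pv ` {(t *\<^sub>R B1, t *\<^sub>R w + u) | t u. u \<in> V}"
    using lie_conj[OF pp ip, of G] lie_struct[OF w] by (simp add: H_def)
  obtain x where x: "dim (orbit_tangent G x) = 2" using assms(4) by (auto simp: cohomogeneity_one_def)
  have dH: "dim (orbit_tangent H (Pv *v x)) = 2"
  proof -
    have oc: "orbit_tangent G x = (\<lambda>y. P *v y) ` orbit_tangent H (Pv *v x)"
      using orbit_conj[OF pp ip, of G x] by (simp add: H_def)
    have inj: "inj_on (\<lambda>y. P *v y) S" for S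
    proof (rule inj_onI)
      fix a b assume "P *v a = P *v b"
      then have "Pv *v (P *v a) = Pv *v (P *v b)" by simp
      then show "a = b" by (simp add: matrix_vector_mul_assoc ip)
    qed
    have "dim ((\<lambda>y. P *v y) ` orbit_tangent H (Pv *v x)) = dim (orbit_tangent H (Pv *v x))"
      by (rule dim_image_eq) (simp_all add: matrix_vector_mul_linear inj)
    then show ?thesis using x oc by simp
  qed
  note dc = dim_constraints[OF w dH]
  define a where "a = (mk3 1 1 0 \<in> V)"
  define b where "b = (mk3 1 (-1) 0 \<in> V)"
  define c where "c = (mk3 0 0 1 \<in> V)"
  have Vc: "V = Vs a b c" unfolding a_def b_def c_def by (rule inv_subspace_class[OF subspace_V V_inv])
  show ?thesis
  proof (rule final_cases[where a = a and b = b and c = c and w = w])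
    show "P \<in> SOo12" by (rule P)
    show "lie_alg G = cm P (matrix_inv P) ` {(t *\<^sub>R B1, t *\<^sub>R w + u) | t u. u \<in> Vs a b c}"
      using LG Vc by (simp add: Pv_def)
    show "subspace (Vs a b c)" using subspace_V Vc by simp
    show "Vs a b c \<noteq> {0}" using dc(1) Vc by simp
    show "Vs a b c \<noteq> UNIV" using dc(2) Vc by simp
    show "Vs a b c = {x. x $ 3 = 0} \<Longrightarrow> w $ 3 = 0" using dc(3) Vc by simp
  qed
qed

end
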